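(* Let $n\ge 3$, $4\le m<\infty$, $I=\{1,\dots,n\}$, $\Gamma$ an $n$-dimensional vector space over a countably infinite skew field, and $\Delta_0=(V,\tau,* )$ as below. Let $\Delta=(W,\tau,* )$ be a geometry over $I$ containing $\Delta_0$ as an induced subgeometry and satisfying Properties (F), (I), (V), (P), (H), (C). Let $z$ be an element of type $n-2$ and let $x,y$ be elements of types in $\{n-1,n\}$ incident with $z$, of the same type if $m$ is odd and of different types if $m$ is even, at distance at least $m+1$ (possibly infinite) in the incidence graph of the rank 2 geometry of elements of types $n-1,n$ incident with $z$. Construct $\Delta'=(W',\tau,* )$ as follows. Consider a path $\gamma=(x_0:=x,x_1,\dots,x_{m-2},x_{m-1}:=y)$ with types alternating between $n-1$ and $n$. If $x$ has type $n$, $x_1$ is taken to be an existing element of type $n-1$ incident with $x$ and $z$ such that $x$ is the only type-$n$ element incident with $x_1$ (such an element exists); similarly, if $y$ has type $n$, $x_{m-2}$ is an existing element of type $n-1$ incident with $y$ and $z$ such that $y$ is the only type-$n$ element incident with it. All other inner vertices of $\gamma$ are new elements. To each new element of type $n-1$ on $\gamma$ assign a precursor: an element of type $n-1$ of $\Delta_0$ incident with $z$, chosen so that the type-$(n-1)$ elements of $\gamma$ have pairwise distinct precursors. A new type-$(n-1)$ element of $\gamma$ is incident exactly with its neighbours on $\gamma$ and with the elements of type $\le n-2$ incident with its precursor. Further, for each new element $x_i$ of type $n$ on $\gamma$ and each element $a$ of type $n-1$ of $\Delta_0$ that is not the precursor of $x_{i-1}$ or $x_{i+1}$, add a new element of type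 $n-1$ with precursor $a$, incident exactly with $x_i$ and with the elements of type $\le n-2$ incident with $a$. Each new element of type $n$ is incident exactly with its neighbours on $\gamma$, all elements of type $\le n-2$, and the new type-$(n-1)$ elements attached to it in the previous sentence. Incidences among elements of $W$ are unchanged. Then $\Delta'$ satisfies Properties (F), (I), (V), (P), (H), (C).
   Context: A geometry over $I$ is a triple $(V,\tau,* )$ with $\tau:V\to I$ and $*$ a symmetric relation such that elements of equal type are incident iff equal. A rank 2 geometry (bipartite incidence graph) is without $k$-gons if it has no cycle of length $2k$. $\Delta_0=(V,\tau,* )$ is the geometry over $I$ whose elements of type $i<n$ are the $i$-dimensional subspaces of $\Gamma$, with no elements of type $n$, two elements being incident iff one subspace contains the other. Properties of $\Delta=(W,\tau,* )\supseteq\Delta_0$: (F) Elements of types $i$ and $n$ with $i\le n-2$ are always incident. (I) There are finitely many elements of type $n$, and $W$ is countable. (V) Every element of $W\setminus V$ has type $n-1$ or $n$. (P) For every element $z$ of type $n-2$, the elements of types $n-1$ and $n$ incident with $z$ form a rank 2 geometry without $k$-gons for all $k<m$. (H) For every element $x$ of type $n-1$, there is an element $y$ of type $n-1$ of $\Delta_0$ (the precursor of $x$) such that $x$ and $y$ are incident with exactly the same elements of types $1,\dots,n-2$. (C) For every element $x$ of type $n$ and every element $y$ of type $n-1$ of $\Delta_0$, there is a unique element of type $n-1$ with precursor $y$ incident with $x$. *)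

theory Defs
  imports Main "HOL-Library.Countable_Set"
begin

definition geometry :: "nat set \<Rightarrow> 'e set \<Rightarrow> ('e \<Rightarrow> nat) \<Rightarrow> ('e \<Rightarrow> 'e \<Rightarrow> bool) \<Rightarrow> bool" where
  "geometry I W tp inc \<longleftrightarrow>
     (\<forall>a\<in>W. tp a \<in> I) \<and>
     (\<forall>a\<in>W. \<forall>b\<in>W. inc a b \<longleftrightarrow> inc b a) \<and>
     (\<forall>a\<in>W. \<forall>b\<in>W. tp a = tp b \<longrightarrow> (inc a b \<longleftrightarrow> a = b))"

definition res_vertices :: "nat \<Rightarrow> 'e set \<Rightarrow> ('e \<Rightarrow> nat) \<Rightarrow> ('e \<Rightarrow> 'e \<Rightarrow> bool) \<Rightarrow> 'e \<Rightarrow> 'e set" where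
  "res_vertices n W tp inc z = {w\<in>W. (tp w = n - 1 \<or> tp w = n) \<and> inc w z}"

definition res_adj :: "nat \<Rightarrow> 'e set \<Rightarrow> ('e \<Rightarrow> nat) \<Rightarrow> ('e \<Rightarrow> 'e \<Rightarrow> bool) \<Rightarrow> 'e \<Rightarrow> 'e \<Rightarrow> 'e \<Rightarrow> bool" where
  "res_adj n W tp inc z a b \<longleftrightarrow>
     a \<in> res_vertices n W tp inc z \<and> b \<in> res_vertices n W tp inc z \<and> tp a \<noteq> tp b \<and> inc a b"

definition res_walk :: "nat \<Rightarrow> 'e set \<Rightarrow> ('e \<Rightarrow> nat) \<Rightarrow> ('e \<Rightarrow> 'e \<Rightarrow> bool) \<Rightarrow> 'e \<Rightarrow> nat \<Rightarrow> 'e \<Rightarrow> 'e \<Rightarrow> bool" where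
  "res_walk n W tp inc z L a b \<longleftrightarrow>
     (\<exists>p. p 0 = a \<and> p L = b \<and> (\<forall>i\<le>L. p i \<in> res_vertices n W tp inc z) \<and>
          (\<forall>i<L. res_adj n W tp inc z (p i) (p (Suc i))))"

definition res_cycle :: "nat \<Rightarrow> 'e set \<Rightarrow> ('e \<Rightarrow> nat) \<Rightarrow> ('e \<Rightarrow> 'e \<Rightarrow> bool) \<Rightarrow> 'e \<Rightarrow> nat \<Rightarrow> bool" where
  "res_cycle n W tp inc z L \<longleftrightarrow>
     3 \<le> L \<and> (\<exists>p. inj_on p {..<L} \<and> (\<forall>i<L. res_adj n W tp inc z (p i) (p (Suc i mod L))))"

section \<open>Properties (F), (I), (V), (P), (H), (C); V is the set of elements of Delta_0\<close>

definition prop_F :: "nat \<Rightarrow> 'e set \<Rightarrow> ('e \<Rightarrow> nat) \<Rightarrow> ('e \<Rightarrow> 'e \<Rightarrow> bool) \<Rightarrow> bool" where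
  "prop_F n W tp inc \<longleftrightarrow> (\<forall>a\<in>W. \<forall>b\<in>W. tp a \<le> n - 2 \<and> tp b = n \<longrightarrow> inc a b)"

definition prop_I :: "nat \<Rightarrow> 'e set \<Rightarrow> ('e \<Rightarrow> nat) \<Rightarrow> bool" where
  "prop_I n W tp \<longleftrightarrow> finite {w\<in>W. tp w = n} \<and> countable W"

definition prop_V :: "nat \<Rightarrow> 'e set \<Rightarrow> 'e set \<Rightarrow> ('e \<Rightarrow> nat) \<Rightarrow> bool" where
  "prop_V n V W tp \<longleftrightarrow> (\<forall>w\<in>W - V. tp w = n - 1 \<or> tp w = n)"

definition prop_P :: "nat \<Rightarrow> nat \<Rightarrow> 'e set \<Rightarrow> ('e \<Rightarrow> nat) \<Rightarrow> ('e \<Rightarrow> 'e \<Rightarrow> bool) \<Rightarrow> bool" where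
  "prop_P n m W tp inc \<longleftrightarrow>
     (\<forall>z\<in>W. tp z = n - 2 \<longrightarrow> (\<forall>k<m. \<not> res_cycle n W tp inc z (2 * k)))"

definition is_precursor :: "nat \<Rightarrow> 'e set \<Rightarrow> 'e set \<Rightarrow> ('e \<Rightarrow> nat) \<Rightarrow> ('e \<Rightarrow> 'e \<Rightarrow> bool) \<Rightarrow> 'e \<Rightarrow> 'e \<Rightarrow> bool" where
  "is_precursor n V W tp inc a b \<longleftrightarrow>
     b \<in> V \<and> tp b = n - 1 \<and>
     (\<forall>e\<in>W. 1 \<le> tp e \<and> tp e \<le> n - 2 \<longrightarrow> (inc a e \<longleftrightarrow> inc b e))"

definition prop_H :: "nat \<Rightarrow> 'e set \<Rightarrow> 'e set \<Rightarrow> ('e \<Rightarrow> nat) \<Rightarrow> ('e \<Rightarrow> 'e \<Rightarrow> bool) \<Rightarrow> bool" where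
  "prop_H n V W tp inc \<longleftrightarrow> (\<forall>a\<in>W. tp a = n - 1 \<longrightarrow> (\<exists>b. is_precursor n V W tp inc a b))"

definition prop_C :: "nat \<Rightarrow> 'e set \<Rightarrow> 'e set \<Rightarrow> ('e \<Rightarrow> nat) \<Rightarrow> ('e \<Rightarrow> 'e \<Rightarrow> bool) \<Rightarrow> bool" where
  "prop_C n V W tp inc \<longleftrightarrow>
     (\<forall>a\<in>W. tp a = n \<longrightarrow> (\<forall>b\<in>V. tp b = n - 1 \<longrightarrow>
        (\<exists>!w. w \<in> W \<and> tp w = n - 1 \<and> is_precursor n V W tp inc w b \<and> inc w a)))"

definition all_props :: "nat \<Rightarrow> nat \<Rightarrow> 'e set \<Rightarrow> 'e set \<Rightarrow> ('e \<Rightarrow> nat) \<Rightarrow> ('e \<Rightarrow> 'e \<Rightarrow> bool) \<Rightarrow> bool" where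
  "all_props n m V W tp inc \<longleftrightarrow>
     prop_F n W tp inc \<and> prop_I n W tp \<and> prop_V n V W tp \<and> prop_P n m W tp inc \<and>
     prop_H n V W tp inc \<and> prop_C n V W tp inc"

section \<open>Subspaces of K^n over a skew field K (left vector space)\<close>

definition vecs :: "nat \<Rightarrow> (nat \<Rightarrow> 'k::division_ring) set" where
  "vecs n = {v. \<forall>i\<ge>n. v i = 0}"

definition lincomb :: "nat \<Rightarrow> (nat \<Rightarrow> 'k::division_ring) \<Rightarrow> (nat \<Rightarrow> nat \<Rightarrow> 'k) \<Rightarrow> (nat \<Rightarrow> 'k)" where
  "lincomb d c b = (\<lambda>j. \<Sum>i<d. c i * b i j)"

definition lin_indep :: "nat \<Rightarrow> (nat \<Rightarrow> nat \<Rightarrow> 'k::division_ring) \<Rightarrow> bool" where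
  "lin_indep d b \<longleftrightarrow> (\<forall>c. lincomb d c b = (\<lambda>_. 0) \<longrightarrow> (\<forall>i<d. c i = 0))"

definition lspan :: "nat \<Rightarrow> (nat \<Rightarrow> nat \<Rightarrow> 'k::division_ring) \<Rightarrow> (nat \<Rightarrow> 'k) set" where
  "lspan d b = {lincomb d c b | c. True}"

definition subspace_dim :: "nat \<Rightarrow> nat \<Rightarrow> (nat \<Rightarrow> 'k::division_ring) set \<Rightarrow> bool" where
  "subspace_dim n d U \<longleftrightarrow> U \<subseteq> vecs n \<and> (\<exists>b. lin_indep d b \<and> lspan d b = U)"

datatype 'e newel = PathV nat | Att nat 'e

text \<open>Type of the i-th vertex of the path gamma (x_0 = x).\<close>
definition ptype :: "nat \<Rightarrow> nat \<Rightarrow> nat \<Rightarrow> nat" where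
  "ptype n tpx i = (if even i = (tpx = n) then n else n - 1)"

definition is_new :: "nat \<Rightarrow> nat \<Rightarrow> nat \<Rightarrow> nat \<Rightarrow> nat \<Rightarrow> bool" where
  "is_new n m tpx tpy i \<longleftrightarrow>
     1 \<le> i \<and> i \<le> m - 2 \<and> \<not> (i = 1 \<and> tpx = n) \<and> \<not> (i = m - 2 \<and> tpy = n)"

text \<open>The i-th vertex of gamma; c1, c2 are the chosen existing x_1, x_{m-2}.\<close>
definition pv :: "nat \<Rightarrow> nat \<Rightarrow> ('e \<Rightarrow> nat) \<Rightarrow> 'e \<Rightarrow> 'e \<Rightarrow> 'e \<Rightarrow> 'e \<Rightarrow> nat \<Rightarrow> 'e + 'e newel" where
  "pv n m tp x y c1 c2 i =
     (if i = 0 then Inl x else if i = m - 1 then Inl y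
      else if i = 1 \<and> tp x = n then Inl c1
      else if i = m - 2 \<and> tp y = n then Inl c2
      else Inr (PathV i))"

definition ext_W :: "nat \<Rightarrow> nat \<Rightarrow> 'e set \<Rightarrow> 'e set \<Rightarrow> ('e \<Rightarrow> nat) \<Rightarrow> 'e \<Rightarrow> 'e \<Rightarrow> (nat \<Rightarrow> 'e) \<Rightarrow> ('e + 'e newel) set" where
  "ext_W n m V W tp x y prec =
     Inl ` W
     \<union> {Inr (PathV i) | i. is_new n m (tp x) (tp y) i}
     \<union> {Inr (Att i a) | i a. is_new n m (tp x) (tp y) i \<and> ptype n (tp x) i = n \<and>
          a \<in> V \<and> tp a = n - 1 \<and> a \<noteq> prec (i - 1) \<and> a \<noteq> prec (Suc i)}"

definition ext_tp :: "nat \<Rightarrow> ('e \<Rightarrow> nat) \<Rightarrow> 'e \<Rightarrow> ('e + 'e newel) \<Rightarrow> nat" where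
  "ext_tp n tp x u = (case u of Inl e \<Rightarrow> tp e
                        | Inr (PathV i) \<Rightarrow> ptype n (tp x) i
                        | Inr (Att i a) \<Rightarrow> n - 1)"

text \<open>New incidences from a new element u to v (before symmetrisation).\<close>
definition new_inc :: "nat \<Rightarrow> nat \<Rightarrow> ('e \<Rightarrow> nat) \<Rightarrow> ('e \<Rightarrow> 'e \<Rightarrow> bool) \<Rightarrow> 'e \<Rightarrow> 'e \<Rightarrow> 'e \<Rightarrow> 'e
    \<Rightarrow> (nat \<Rightarrow> 'e) \<Rightarrow> ('e + 'e newel) \<Rightarrow> ('e + 'e newel) \<Rightarrow> bool" where
  "new_inc n m tp inc x y c1 c2 prec u v \<longleftrightarrow>
     (\<exists>i. Suc i \<le> m - 1 \<and> u = pv n m tp x y c1 c2 i \<and> v = pv n m tp x y c1 c2 (Suc i)) \<or>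
     (\<exists>i e. u = Inr (PathV i) \<and> v = Inl e \<and> tp e \<le> n - 2 \<and>
            (ptype n (tp x) i = n \<or> inc e (prec i))) \<or>
     (\<exists>i a. u = Inr (Att i a) \<and>
            (v = Inr (PathV i) \<or> (\<exists>e. v = Inl e \<and> tp e \<le> n - 2 \<and> inc e a)))"

definition ext_inc :: "nat \<Rightarrow> nat \<Rightarrow> ('e \<Rightarrow> nat) \<Rightarrow> ('e \<Rightarrow> 'e \<Rightarrow> bool) \<Rightarrow> 'e \<Rightarrow> 'e \<Rightarrow> 'e \<Rightarrow> 'e
    \<Rightarrow> (nat \<Rightarrow> 'e) \<Rightarrow> ('e + 'e newel) \<Rightarrow> ('e + 'e newel) \<Rightarrow> bool" where
  "ext_inc n m tp inc x y c1 c2 prec u v \<longleftrightarrow>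
     (case (u, v) of
        (Inl a, Inl b) \<Rightarrow> inc a b
      | _ \<Rightarrow> u = v \<or> new_inc n m tp inc x y c1 c2 prec u v \<or> new_inc n m tp inc x y c1 c2 prec v u)"

text \<open>Admissible choice of an existing x_1 (resp. x_{m-2}) next to the endpoint x of type n.\<close>
definition end_ok :: "nat \<Rightarrow> 'e set \<Rightarrow> ('e \<Rightarrow> nat) \<Rightarrow> ('e \<Rightarrow> 'e \<Rightarrow> bool) \<Rightarrow> 'e \<Rightarrow> 'e \<Rightarrow> 'e \<Rightarrow> bool" where
  "end_ok n W tp inc z x c \<longleftrightarrow>
     c \<in> W \<and> tp c = n - 1 \<and> inc c x \<and> inc c z \<and> (\<forall>w\<in>W. tp w = n \<and> inc c w \<longrightarrow> w = x)"

text \<open>Admissible precursor assignment along gamma: prec i is the precursor of the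
type-(n-1) vertex x_i (for existing vertices it is their precursor in Delta).\<close>
definition prec_ok :: "nat \<Rightarrow> nat \<Rightarrow> 'e set \<Rightarrow> 'e set \<Rightarrow> ('e \<Rightarrow> nat) \<Rightarrow> ('e \<Rightarrow> 'e \<Rightarrow> bool)
    \<Rightarrow> 'e \<Rightarrow> 'e \<Rightarrow> 'e \<Rightarrow> 'e \<Rightarrow> 'e \<Rightarrow> (nat \<Rightarrow> 'e) \<Rightarrow> bool" where
  "prec_ok n m V W tp inc z x y c1 c2 prec \<longleftrightarrow>
     (\<forall>i\<le>m - 1. ptype n (tp x) i = n - 1 \<longrightarrow>
        (case pv n m tp x y c1 c2 i of
           Inl e \<Rightarrow> is_precursor n V W tp inc e (prec i)
         | Inr _ \<Rightarrow> prec i \<in> V \<and> tp (prec i) = n - 1 \<and> inc (prec i) z)) \<and>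
     inj_on prec {i. i \<le> m - 1 \<and> ptype n (tp x) i = n - 1}"

end

theory Submission
  imports Defs
begin

lemma lspanI: "v = lincomb d c b \<Longrightarrow> v \<in> lspan d b"
  unfolding lspan_def by blast

lemma lspanE: "v \<in> lspan d b \<Longrightarrow> (\<And>c. v = lincomb d c b \<Longrightarrow> P) \<Longrightarrow> P"
  unfolding lspan_def by blast

lemma lincomb_apply: "lincomb d c b j = (\<Sum>i<d. c i * b i j)"
  by (simp add: lincomb_def)

lemma lincomb_Suc: "lincomb (Suc d) c b j = lincomb d c b j + c d * b d j"
  by (simp add: lincomb_def)

lemma lincomb_upd: "lincomb d c (b(d := v)) = lincomb d c b"
  unfolding lincomb_def by (rule ext, rule sum.cong) auto

lemma lincomb_cong: "(\<And>i. i < d \<Longrightarrow> c i = c' i) \<Longrightarrow> (\<And>i. i < d \<Longrightarrow> b i = b' i) \<Longrightarrow>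
   lincomb d c b = lincomb d c' b'"
  unfolding lincomb_def by (rule ext, rule sum.cong) auto

lemma lincomb_comp:
  assumes "\<And>i. i < d \<Longrightarrow> b i = lincomb e (a i) c"
  shows "lincomb d g b = lincomb e (\<lambda>k. \<Sum>i<d. g i * a i k) c"
proof (rule ext)
  fix j
  have "lincomb d g b j = (\<Sum>i<d. g i * (\<Sum>k<e. a i k * c k j))"
    using assms by (simp add: lincomb_def)
  also have "\<dots> = (\<Sum>i<d. \<Sum>k<e. g i * a i k * c k j)"
    by (simp add: sum_distrib_left mult.assoc)
  also have "\<dots> = (\<Sum>k<e. \<Sum>i<d. g i * a i k * c k j)"
    by (rule sum.swap)
  also have "\<dots> = lincomb e (\<lambda>k. \<Sum>i<d. g i * a i k) c j"
    by (simp add: lincomb_def sum_distrib_right)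
  finally show "lincomb d g b j = lincomb e (\<lambda>k. \<Sum>i<d. g i * a i k) c j" .
qed

lemma ind_lincomb:
  assumes i: "i < d"
  shows "lincomb d (\<lambda>i'. if i' = i then 1 else 0) b = b i"
  unfolding lincomb_def
proof (rule ext)
  fix j
  have "(\<Sum>ia<d. (if ia = i then 1 else 0) * b ia j) = (\<Sum>ia<d. if ia = i then b i j else 0)"
    by (rule sum.cong) auto
  also have "\<dots> = b i j" using i by simp
  finally show "(\<Sum>ia<d. (if ia = i then 1 else 0) * b ia j) = b i j" .
qed

lemma lincomb_diff: "lincomb N (\<lambda>k. a k - s * a' k) c j = lincomb N a c j - s * lincomb N a' c j"
  by (simp add: lincomb_def left_diff_distrib sum_subtractf sum_distrib_left mult.assoc)

lemma lspan_member: "i < d \<Longrightarrow> b i \<in> lspan d b"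
proof -
  assume i: "i < d"
  have "lincomb d (\<lambda>i'. if i' = i then 1 else 0) b = b i"
    by (rule ind_lincomb[OF i])
  then show ?thesis by (intro lspanI) (rule sym)
qed

lemma zero_lspan: "(\<lambda>_. 0) \<in> lspan d b"
proof -
  have "lincomb d (\<lambda>_. 0) b = (\<lambda>_. 0)" by (simp add: lincomb_def)
  then show ?thesis by (intro lspanI) (rule sym)
qed

lemma lspan_lincomb:
  assumes "\<And>i. i < d \<Longrightarrow> b i \<in> lspan e c"
  shows "lincomb d g b \<in> lspan e c"
proof -
  have "\<forall>i. \<exists>a. i < d \<longrightarrow> b i = lincomb e a c" using assms unfolding lspan_def by blast
  then obtain A where A: "\<And>i. i < d \<Longrightarrow> b i = lincomb e (A i) c" by metis
  show ?thesis using lincomb_comp[of d b e A c g, OF A] unfolding lspan_def by blast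
qed

lemma lspan_subset:
  assumes "\<And>i. i < d \<Longrightarrow> b i \<in> lspan e c"
  shows "lspan d b \<subseteq> lspan e c"
proof
  fix v assume "v \<in> lspan d b"
  then obtain g where "v = lincomb d g b" unfolding lspan_def by blast
  then show "v \<in> lspan e c" using lspan_lincomb[OF assms] by simp
qed

lemma lspan_vecs:
  assumes "\<And>i. i < d \<Longrightarrow> b i \<in> vecs n"
  shows "lspan d b \<subseteq> vecs n"
  using assms unfolding lspan_def vecs_def lincomb_def by auto

lemma lin_indep_nz: "lin_indep d b \<Longrightarrow> i < d \<Longrightarrow> b i \<noteq> (\<lambda>_. 0)"
proof
  assume li: "lin_indep d b" and i: "i < d" and b0: "b i = (\<lambda>_. 0)"
  have "lincomb d (\<lambda>i'. if i' = i then 1 else 0) b = b i"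
    by (rule ind_lincomb[OF i])
  with b0 have "lincomb d (\<lambda>i'. if i' = i then 1 else 0) b = (\<lambda>_. 0)" by simp
  with li i have "(\<lambda>i'. if i' = i then (1::'a) else 0) i = 0" unfolding lin_indep_def by blast
  then show False by simp
qed

lemma sum_skip:
  fixes F :: "nat \<Rightarrow> 'a::comm_monoid_add"
  assumes "i0 < d"
  shows "(\<Sum>i<d. F i) = F i0 + (\<Sum>i<d - 1. F (if i < i0 then i else Suc i))"
  using assms
proof (induction d)
  case 0 then show ?case by simp
next
  case (Suc d)
  show ?case
  proof (cases "i0 = d")
    case True
    have "(\<Sum>i<d. F (if i < i0 then i else Suc i)) = (\<Sum>i<d. F i)"
      using True by (intro sum.cong) auto
    then show ?thesis using True by (simp add: add.commute)
  next
    case False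
    with Suc.prems have lt: "i0 < d" by simp
    then obtain d' where d': "d = Suc d'" by (cases d) auto
    have A: "(\<Sum>i<Suc d. F i) = (\<Sum>i<d. F i) + F d" by simp
    have B: "(\<Sum>i<d. F i) = F i0 + (\<Sum>i<d - 1. F (if i < i0 then i else Suc i))"
      by (rule Suc.IH[OF lt])
    have C: "(\<Sum>i<d - 1. F (if i < i0 then i else Suc i)) + F d =
        (\<Sum>i<Suc d - 1. F (if i < i0 then i else Suc i))"
    proof -
      have "\<not> d' < i0" using lt d' by simp
      then show ?thesis unfolding d' by simp
    qed
    show ?thesis using A B C by (simp add: add.assoc)
  qed
qed

lemma steinitz_aux:
  fixes c :: "nat \<Rightarrow> nat \<Rightarrow> 'k::division_ring"
  shows "\<forall>d b. lin_indep d b \<and> (\<forall>i<d. b i \<in> lspan e c) \<longrightarrow> d \<le> e"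
proof (induction e)
  case 0
  show ?case
  proof (intro allI impI)
    fix d and b :: "nat \<Rightarrow> nat \<Rightarrow> 'k"
    assume h: "lin_indep d b \<and> (\<forall>i<d. b i \<in> lspan 0 c)"
    show "d \<le> 0"
    proof (rule ccontr)
      assume "\<not> d \<le> 0"
      then have "0 < d" by simp
      with h have "b 0 \<in> lspan 0 c" by blast
      then have "b 0 = (\<lambda>_. 0)" unfolding lspan_def lincomb_def by auto
      with lin_indep_nz[of d b 0] h \<open>0 < d\<close> show False by blast
    qed
  qed
next
  case (Suc e)
  show ?case
  proof (intro allI impI)
    fix d and b :: "nat \<Rightarrow> nat \<Rightarrow> 'k"
    assume h: "lin_indep d b \<and> (\<forall>i<d. b i \<in> lspan (Suc e) c)"
    have "\<forall>i. \<exists>a. i < d \<longrightarrow> b i = lincomb (Suc e) a c" using h unfolding lspan_def by blast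
    then obtain A where A: "\<And>i. i < d \<Longrightarrow> b i = lincomb (Suc e) (A i) c" by metis
    show "d \<le> Suc e"
    proof (cases "\<forall>i<d. A i e = 0")
      case True
      have "\<forall>i<d. b i \<in> lspan e c"
      proof (intro allI impI)
        fix i assume "i < d"
        then have "b i = lincomb e (A i) c" using A True by (auto simp: lincomb_Suc)
        then show "b i \<in> lspan e c" unfolding lspan_def by blast
      qed
      with Suc.IH h have "d \<le> e" by blast
      then show ?thesis by simp
    next
      case False
      then obtain i0 where i0: "i0 < d" "A i0 e \<noteq> 0" by blast
      define \<sigma> where "\<sigma> i = (if i < i0 then i else Suc i)" for i
      define t where "t i = A (\<sigma> i) e * inverse (A i0 e)" for i
      define b' where "b' i = (\<lambda>j. b (\<sigma> i) j - t i * b i0 j)" for i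
      have \<sigma>d: "\<sigma> i < d" if "i < d - 1" for i using that i0 by (auto simp: \<sigma>_def)
      have b'span: "b' i \<in> lspan e c" if "i < d - 1" for i
      proof -
        define a where "a k = A (\<sigma> i) k - t i * A i0 k" for k
        have ae: "a e = 0" using i0(2) by (simp add: a_def t_def mult.assoc)
        have "b' i = lincomb e a c"
        proof (rule ext)
          fix j
          have "b' i j = lincomb (Suc e) (A (\<sigma> i)) c j - t i * lincomb (Suc e) (A i0) c j"
            using A[OF \<sigma>d[OF that]] A[OF i0(1)] by (simp add: b'_def)
          also have "\<dots> = lincomb (Suc e) a c j"
            unfolding a_def by (rule lincomb_diff[symmetric])
          also have "\<dots> = lincomb e a c j" by (simp add: lincomb_Suc ae)
          finally show "b' i j = lincomb e a c j" .
        qed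
        then show ?thesis unfolding lspan_def by blast
      qed
      have li': "lin_indep (d - 1) b'"
        unfolding lin_indep_def
      proof (intro allI impI)
        fix g i
        assume g: "lincomb (d - 1) g b' = (\<lambda>_. 0)" and i: "i < d - 1"
        define G where "G k = (if k = i0 then - (\<Sum>l<d - 1. g l * t l)
                              else if k < i0 then g k else g (k - 1))" for k
        have G\<sigma>: "G (\<sigma> l) = g l" for l by (auto simp: G_def \<sigma>_def)
        have Gi0: "G i0 = - (\<Sum>l<d - 1. g l * t l)" by (simp add: G_def)
        have "lincomb d G b = (\<lambda>_. 0)"
        proof (rule ext)
          fix j
          have "lincomb d G b j = G i0 * b i0 j + (\<Sum>l<d - 1. G (\<sigma> l) * b (\<sigma> l) j)"
            unfolding lincomb_def \<sigma>_def by (rule sum_skip[OF i0(1)])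
          also have "\<dots> = (\<Sum>l<d - 1. g l * b (\<sigma> l) j) - (\<Sum>l<d - 1. g l * t l) * b i0 j"
            by (simp only: G\<sigma> Gi0 minus_mult_left[symmetric] uminus_add_conv_diff)
          also have "\<dots> = lincomb (d - 1) g b' j"
            by (simp add: lincomb_def b'_def right_diff_distrib sum_subtractf sum_distrib_right mult.assoc)
          also have "\<dots> = 0" using g by simp
          finally show "lincomb d G b j = 0" .
        qed
        then have "G (\<sigma> i) = 0" using h \<sigma>d[OF i] unfolding lin_indep_def by blast
        then show "g i = 0" by (simp add: G\<sigma>)
      qed
      with b'span Suc.IH have "d - 1 \<le> e" by blast
      then show ?thesis by simp
    qed
  qed
qed

lemma steinitz:
  fixes c :: "nat \<Rightarrow> nat \<Rightarrow> 'k::division_ring"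
  assumes "lin_indep d b" "\<And>i. i < d \<Longrightarrow> b i \<in> lspan e c"
  shows "d \<le> e"
  using steinitz_aux[of e c] assms by blast

lemma dim_unique:
  assumes "subspace_dim n d U" "subspace_dim n d' U"
  shows "d = d'"
proof -
  obtain b where b: "lin_indep d b" "lspan d b = U" using assms(1) unfolding subspace_dim_def by blast
  obtain b' where b': "lin_indep d' b'" "lspan d' b' = U" using assms(2) unfolding subspace_dim_def by blast
  have "d \<le> d'" using steinitz[OF b(1), of d' b'] lspan_member[of _ d b] b b' by blast
  moreover have "d' \<le> d" using steinitz[OF b'(1), of d b] lspan_member[of _ d' b'] b b' by blast
  ultimately show ?thesis by simp
qed

lemma lin_indep_ext:
  fixes b :: "nat \<Rightarrow> nat \<Rightarrow> 'k::division_ring"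
  assumes li: "lin_indep d b" and v: "v \<notin> lspan d b"
  shows "lin_indep (Suc d) (b(d := v))"
  unfolding lin_indep_def
proof (intro allI impI)
  fix g i
  assume g: "lincomb (Suc d) g (b(d := v)) = (\<lambda>_. 0)" and i: "i < Suc d"
  have eq: "lincomb d g b j + g d * v j = 0" for j
    using fun_cong[OF g, of j] by (simp add: lincomb_Suc lincomb_upd)
  have gd: "g d = 0"
  proof (rule ccontr)
    assume nz: "g d \<noteq> 0"
    have "v = lincomb d (\<lambda>i. - inverse (g d) * g i) b"
    proof (rule ext)
      fix j
      have "g d * v j = - lincomb d g b j" using eq[of j] by (simp add: eq_neg_iff_add_eq_0 add.commute)
      then have "inverse (g d) * (g d * v j) = inverse (g d) * (- lincomb d g b j)" by simp
      then have "v j = - (inverse (g d) * lincomb d g b j)"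
        using nz by (simp add: mult.assoc[symmetric])
      also have "\<dots> = lincomb d (\<lambda>i. - inverse (g d) * g i) b j"
        by (simp add: lincomb_def sum_distrib_left mult.assoc sum_negf)
      finally show "v j = lincomb d (\<lambda>i. - inverse (g d) * g i) b j" .
    qed
    with v show False unfolding lspan_def by blast
  qed
  have "lincomb d g b = (\<lambda>_. 0)" using eq gd by (auto intro: ext)
  then have "\<forall>i<d. g i = 0" using li unfolding lin_indep_def by blast
  with gd i show "g i = 0" by (cases "i = d") auto
qed

locale base =
  fixes n m :: nat
    and W V :: "'e set" and tp :: "'e \<Rightarrow> nat" and inc :: "'e \<Rightarrow> 'e \<Rightarrow> bool"
    and sp :: "'e \<Rightarrow> (nat \<Rightarrow> 'k::division_ring) set"
    and x y z :: 'e
  assumes n3: "3 \<le> n" and m4: "4 \<le> m"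
    and K_inf: "infinite (UNIV :: 'k set)" and K_count: "countable (UNIV :: 'k set)"
    and geom: "geometry {1..n} W tp inc"
    and VW: "V \<subseteq> W"
    and sp_bij: "bij_betw sp V {U. \<exists>d. 1 \<le> d \<and> d \<le> n - 1 \<and> subspace_dim n d U}"
    and sp_tp: "\<forall>v\<in>V. subspace_dim n (tp v) (sp v)"
    and sp_inc: "\<forall>v\<in>V. \<forall>w\<in>V. inc v w \<longleftrightarrow> (sp v \<subseteq> sp w \<or> sp w \<subseteq> sp v)"
    and props: "all_props n m V W tp inc"
    and z: "z \<in> W" "tp z = n - 2"
    and x: "x \<in> W" "tp x = n - 1 \<or> tp x = n" "inc x z"
    and y: "y \<in> W" "tp y = n - 1 \<or> tp y = n" "inc y z"
    and parity: "odd m \<longrightarrow> tp x = tp y" "even m \<longrightarrow> tp x \<noteq> tp y"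
    and far: "\<forall>L\<le>m. \<not> res_walk n W tp inc z L x y"
begin

lemma tp_range: "a \<in> W \<Longrightarrow> 1 \<le> tp a \<and> tp a \<le> n"
  using geom unfolding geometry_def by auto

lemma inc_sym: "a \<in> W \<Longrightarrow> b \<in> W \<Longrightarrow> inc a b = inc b a"
  using geom unfolding geometry_def by auto

lemma inc_same: "a \<in> W \<Longrightarrow> b \<in> W \<Longrightarrow> tp a = tp b \<Longrightarrow> inc a b \<longleftrightarrow> a = b"
  using geom unfolding geometry_def by auto

lemma pF: "prop_F n W tp inc" using props unfolding all_props_def by blast
lemma pI: "prop_I n W tp" using props unfolding all_props_def by blast
lemma pV: "prop_V n V W tp" using props unfolding all_props_def by blast
lemma pP: "prop_P n m W tp inc" using props unfolding all_props_def by blast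
lemma pH: "prop_H n V W tp inc" using props unfolding all_props_def by blast
lemma pC: "prop_C n V W tp inc" using props unfolding all_props_def by blast

lemma V_W: "v \<in> V \<Longrightarrow> v \<in> W" using VW by blast

lemma in_V: "w \<in> W \<Longrightarrow> tp w \<noteq> n - 1 \<Longrightarrow> tp w \<noteq> n \<Longrightarrow> w \<in> V"
  using pV unfolding prop_V_def by blast

lemma z_V: "z \<in> V" using in_V[OF z(1)] z(2) n3 by simp

lemma sp_dim: "v \<in> V \<Longrightarrow> subspace_dim n (tp v) (sp v)" using sp_tp by blast

lemma sp_basis:
  assumes "v \<in> V"
  obtains b where "lin_indep (tp v) b" "lspan (tp v) b = sp v" "sp v \<subseteq> vecs n"
  using sp_dim[OF assms] unfolding subspace_dim_def by blast

lemma sp_inj: "v \<in> V \<Longrightarrow> w \<in> V \<Longrightarrow> sp v = sp w \<Longrightarrow> v = w"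
  using sp_bij unfolding bij_betw_def inj_on_def by blast

lemma sp_surj:
  assumes "subspace_dim n d U" "1 \<le> d" "d \<le> n - 1"
  shows "\<exists>v\<in>V. sp v = U \<and> tp v = d"
proof -
  have "U \<in> {U. \<exists>d. 1 \<le> d \<and> d \<le> n - 1 \<and> subspace_dim n d U}" using assms by blast
  then have "U \<in> sp ` V" using sp_bij by (simp add: bij_betw_def)
  then obtain v where v: "v \<in> V" "sp v = U" by blast
  have "subspace_dim n d (sp v)" using assms(1) v(2) by simp
  then have "tp v = d" by (rule dim_unique[OF sp_dim[OF v(1)]])
  with v show ?thesis by blast
qed

lemma inc_V: "v \<in> V \<Longrightarrow> w \<in> V \<Longrightarrow> inc v w \<longleftrightarrow> (sp v \<subseteq> sp w \<or> sp w \<subseteq> sp v)"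
  using sp_inc by blast

lemma sub_le:
  assumes "v \<in> V" "w \<in> V" "sp v \<subseteq> sp w"
  shows "tp v \<le> tp w"
proof -
  obtain b where b: "lin_indep (tp v) b" "lspan (tp v) b = sp v" "sp v \<subseteq> vecs n" by (rule sp_basis[OF assms(1)])
  obtain b' where b': "lin_indep (tp w) b'" "lspan (tp w) b' = sp w" "sp w \<subseteq> vecs n" by (rule sp_basis[OF assms(2)])
  have "b i \<in> lspan (tp w) b'" if i: "i < tp v" for i
  proof -
    have "b i \<in> lspan (tp v) b" by (rule lspan_member[OF i])
    then have "b i \<in> sp w" using b(2) assms(3) by auto
    then show ?thesis using b'(2) by simp
  qed
  then show ?thesis by (rule steinitz[OF b(1)])
qed

lemma inc_lt_sub:
  assumes "v \<in> V" "w \<in> V" "tp v < tp w" "inc v w"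
  shows "sp v \<subseteq> sp w"
proof (rule ccontr)
  assume "\<not> sp v \<subseteq> sp w"
  then have "sp w \<subseteq> sp v" using assms(4) inc_V[OF assms(1,2)] by blast
  then have "tp w \<le> tp v" by (rule sub_le[OF assms(2,1)])
  then show False using assms(3) by simp
qed

lemma line_dim:
  fixes u :: "nat \<Rightarrow> 'k"
  assumes "u \<in> vecs n" "u \<noteq> (\<lambda>_. 0)"
  shows "subspace_dim n 1 (lspan 1 (\<lambda>_. u))"
  unfolding subspace_dim_def
proof (intro conjI exI)
  show "lspan 1 (\<lambda>_. u) \<subseteq> vecs n" using lspan_vecs[of 1 "\<lambda>_. u" n] assms by blast
  show "lin_indep 1 (\<lambda>_. u)"
    unfolding lin_indep_def
  proof (intro allI impI)
    fix c :: "nat \<Rightarrow> 'k" and i assume h: "lincomb 1 c (\<lambda>_. u) = (\<lambda>_. 0)" and i: "i < (1::nat)"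
    obtain j where j: "u j \<noteq> 0" using assms(2) by auto
    have "c 0 * u j = 0" using fun_cong[OF h, of j] by (simp add: lincomb_def)
    with j i show "c i = 0" by simp
  qed
qed simp

lemma precursor_unique:
  assumes b: "b \<in> V" "tp b = n - 1" and b': "b' \<in> V" "tp b' = n - 1"
    and same: "\<forall>e\<in>W. 1 \<le> tp e \<and> tp e \<le> n - 2 \<longrightarrow> (inc b e \<longleftrightarrow> inc b' e)"
  shows "b = b'"
proof (rule ccontr)
  assume ne: "b \<noteq> b'"
  have "\<not> sp b \<subseteq> sp b'"
  proof
    assume "sp b \<subseteq> sp b'"
    then have "inc b b'" using inc_V b b' by blast
    then show False using inc_same[OF V_W[OF b(1)] V_W[OF b'(1)]] b b' ne by simp
  qed
  then obtain u where u: "u \<in> sp b" "u \<notin> sp b'" by blast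
  obtain bb where bb: "lin_indep (tp b) bb" "lspan (tp b) bb = sp b" "sp b \<subseteq> vecs n"
    by (rule sp_basis[OF b(1)])
  obtain bb' where bb': "lin_indep (tp b') bb'" "lspan (tp b') bb' = sp b'" "sp b' \<subseteq> vecs n"
    by (rule sp_basis[OF b'(1)])
  have u0: "u \<noteq> (\<lambda>_. 0)" using u(2) zero_lspan[of "tp b'" bb'] bb'(2) by auto
  have uv: "u \<in> vecs n" using u(1) bb(3) by blast
  obtain e where e: "e \<in> V" "sp e = lspan 1 (\<lambda>_. u)" "tp e = 1"
    using sp_surj[OF line_dim[OF uv u0]] n3 by force
  have ue: "u \<in> sp e" using e(2) lspan_member[of 0 1 "\<lambda>_. u"] by simp
  have "sp e \<subseteq> sp b" unfolding e(2) bb(2)[symmetric]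
    by (rule lspan_subset) (use u(1) bb(2) in auto)
  then have "inc e b" using inc_V e(1) b(1) by blast
  then have "inc b e" using inc_sym V_W e(1) b(1) by blast
  moreover have "1 \<le> tp e \<and> tp e \<le> n - 2" using e(3) n3 by simp
  ultimately have "inc b' e" using same V_W[OF e(1)] by blast
  then have "sp e \<subseteq> sp b' \<or> sp b' \<subseteq> sp e" using inc_V e(1) b'(1) by blast
  moreover have "\<not> sp e \<subseteq> sp b'" using ue u(2) by blast
  moreover have "\<not> sp b' \<subseteq> sp e"
  proof
    assume "sp b' \<subseteq> sp e"
    then have "tp b' \<le> tp e" using sub_le b'(1) e(1) by blast
    then show False using b'(2) e(3) n3 by simp
  qed
  ultimately show False by blast
qed

lemma full_span:
  assumes "lin_indep d B" "\<And>i. i < d \<Longrightarrow> B i \<in> lspan d C" "lin_indep d C"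
  shows "lspan d B = lspan d C"
proof
  show "lspan d B \<subseteq> lspan d C" by (rule lspan_subset) (use assms(2) in auto)
  show "lspan d C \<subseteq> lspan d B"
  proof
    fix w assume w: "w \<in> lspan d C"
    show "w \<in> lspan d B"
    proof (rule ccontr)
      assume "w \<notin> lspan d B"
      then have li: "lin_indep (Suc d) (B(d := w))" using lin_indep_ext assms(1) by blast
      have "Suc d \<le> d"
        by (rule steinitz[OF li]) (use assms(2) w in \<open>auto simp: less_Suc_eq\<close>)
      then show False by simp
    qed
  qed
qed

lemma hyp_meet:
  assumes p1: "p1 \<in> V" "tp p1 = n - 1" and p2: "p2 \<in> V" "tp p2 = n - 1" and pne: "p1 \<noteq> p2"
    and z1: "z1 \<in> V" "tp z1 = n - 2" and z2: "z2 \<in> V" "tp z2 = n - 2"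
    and i11: "inc p1 z1" and i12: "inc p1 z2" and i21: "inc p2 z1" and i22: "inc p2 z2"
  shows "z1 = z2"
proof (rule ccontr)
  assume zne: "z1 \<noteq> z2"
  have lt: "n - 2 < n - 1" using n3 by simp
  have s11: "sp z1 \<subseteq> sp p1" using inc_lt_sub[OF z1(1) p1(1)] lt z1 p1 inc_sym[OF V_W[OF p1(1)] V_W[OF z1(1)]] i11 by simp
  have s12: "sp z2 \<subseteq> sp p1" using inc_lt_sub[OF z2(1) p1(1)] lt z2 p1 inc_sym[OF V_W[OF p1(1)] V_W[OF z2(1)]] i12 by simp
  have s21: "sp z1 \<subseteq> sp p2" using inc_lt_sub[OF z1(1) p2(1)] lt z1 p2 inc_sym[OF V_W[OF p2(1)] V_W[OF z1(1)]] i21 by simp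
  have s22: "sp z2 \<subseteq> sp p2" using inc_lt_sub[OF z2(1) p2(1)] lt z2 p2 inc_sym[OF V_W[OF p2(1)] V_W[OF z2(1)]] i22 by simp
  have "\<not> sp z2 \<subseteq> sp z1"
  proof
    assume "sp z2 \<subseteq> sp z1"
    then have "inc z2 z1" using inc_V z1 z2 by blast
    then show False using inc_same[OF V_W[OF z2(1)] V_W[OF z1(1)]] z1 z2 zne by simp
  qed
  then obtain u where u: "u \<in> sp z2" "u \<notin> sp z1" by blast
  obtain bz where bz: "lin_indep (tp z1) bz" "lspan (tp z1) bz = sp z1" "sp z1 \<subseteq> vecs n"
    by (rule sp_basis[OF z1(1)])
  note bz = bz[unfolded z1(2)]
  define B where "B = bz(n - 2 := u)"
  have nn: "Suc (n - 2) = n - 1" using n3 by simp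
  have liB: "lin_indep (n - 1) B" using lin_indep_ext[OF bz(1)] u(2) bz(2) nn unfolding B_def by metis
  have Bin: "B i \<in> sp p" if "i < n - 1" "sp z1 \<subseteq> sp p" "sp z2 \<subseteq> sp p" for i p
  proof (cases "i = n - 2")
    case True then show ?thesis using u(1) that unfolding B_def by auto
  next
    case False
    then have "i < n - 2" using that(1) by simp
    then have "bz i \<in> sp z1" using lspan_member bz(2) by blast
    then show ?thesis using that False unfolding B_def by auto
  qed
  have eq: "lspan (n - 1) B = sp p" if pp: "p \<in> V" "tp p = n - 1" "sp z1 \<subseteq> sp p" "sp z2 \<subseteq> sp p" for p
  proof -
    obtain bp where bp: "lin_indep (tp p) bp" "lspan (tp p) bp = sp p" "sp p \<subseteq> vecs n"
      by (rule sp_basis[OF pp(1)])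
    note bp = bp[unfolded pp(2)]
    have "\<And>i. i < n - 1 \<Longrightarrow> B i \<in> lspan (n - 1) bp" using Bin[OF _ pp(3,4)] bp(2) by simp
    then show ?thesis using full_span[OF liB _ bp(1)] bp(2) by simp
  qed
  have "sp p1 = sp p2" using eq[OF p1 s11 s12] eq[OF p2 s21 s22] by simp
  then show False using sp_inj p1 p2 pne by blast
qed

end

context base
begin

lemma x_res: "x \<in> res_vertices n W tp inc z" using x by (simp add: res_vertices_def)
lemma y_res: "y \<in> res_vertices n W tp inc z" using y by (simp add: res_vertices_def)

lemma walk0: "a \<in> res_vertices n W tp inc z' \<Longrightarrow> res_walk n W tp inc z' 0 a a"
  unfolding res_walk_def by (rule exI[of _ "\<lambda>_. a"]) simp

lemma walk1: "res_adj n W tp inc z' a b \<Longrightarrow> res_walk n W tp inc z' 1 a b"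
  unfolding res_walk_def
  by (rule exI[of _ "\<lambda>i. if i = 0 then a else b"]) (auto simp: res_adj_def le_Suc_eq)

lemma x_ne_y: "x \<noteq> y"
proof
  assume "x = y"
  then have "res_walk n W tp inc z 0 x y" using walk0[OF x_res] by simp
  then show False using far by auto
qed

lemma not_adj_xy: "\<not> res_adj n W tp inc z x y"
proof
  assume "res_adj n W tp inc z x y"
  then have "res_walk n W tp inc z 1 x y" by (rule walk1)
  then show False using far m4 by auto
qed

lemma res_adj_sym:
  "res_adj n W tp inc z' a b \<Longrightarrow> res_adj n W tp inc z' b a"
  unfolding res_adj_def res_vertices_def using inc_sym by auto

lemma walk_rev:
  assumes "res_walk n W tp inc z' L a b"
  shows "res_walk n W tp inc z' L b a"
proof -
  obtain p where p: "p 0 = a" "p L = b" "\<forall>i\<le>L. p i \<in> res_vertices n W tp inc z'"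
    "\<forall>i<L. res_adj n W tp inc z' (p i) (p (Suc i))"
    using assms unfolding res_walk_def by blast
  show ?thesis unfolding res_walk_def
  proof (intro exI[of _ "\<lambda>i. p (L - i)"] conjI allI impI)
    show "p (L - 0) = b" using p by simp
    show "p (L - L) = a" using p by simp
    fix i
    show "i \<le> L \<Longrightarrow> p (L - i) \<in> res_vertices n W tp inc z'" using p by simp
    assume i: "i < L"
    have "res_adj n W tp inc z' (p (L - Suc i)) (p (Suc (L - Suc i)))" using p i by simp
    moreover have "Suc (L - Suc i) = L - i" using i by simp
    ultimately show "res_adj n W tp inc z' (p (L - i)) (p (L - Suc i))"
      using res_adj_sym by simp
  qed
qed

end

locale ext = base +
  fixes c1 c2 :: 'e and prec :: "nat \<Rightarrow> 'e"
  assumes e1: "tp x = n \<longrightarrow> end_ok n W tp inc z x c1"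
    and e2: "tp y = n \<longrightarrow> end_ok n W tp inc z y c2"
    and pok: "prec_ok n m V W tp inc z x y c1 c2 prec"
begin

abbreviation "W' \<equiv> ext_W n m V W tp x y prec"
abbreviation "T' \<equiv> ext_tp n tp x"
abbreviation "I' \<equiv> ext_inc n m tp inc x y c1 c2 prec"
abbreviation "PV \<equiv> pv n m tp x y c1 c2"
abbreviation "NI \<equiv> new_inc n m tp inc x y c1 c2 prec"
abbreviation "pt \<equiv> ptype n (tp x)"
abbreviation "new \<equiv> is_new n m (tp x) (tp y)"
abbreviation "V' \<equiv> Inl ` V :: ('e + 'e newel) set"

lemma c1: assumes "tp x = n"
  shows "c1 \<in> W" "tp c1 = n - 1" "inc c1 x" "inc c1 z" "\<And>w. w \<in> W \<Longrightarrow> tp w = n \<Longrightarrow> inc c1 w \<Longrightarrow> w = x"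
  using e1 assms unfolding end_ok_def by auto

lemma c2: assumes "tp y = n"
  shows "c2 \<in> W" "tp c2 = n - 1" "inc c2 y" "inc c2 z" "\<And>w. w \<in> W \<Longrightarrow> tp w = n \<Longrightarrow> inc c2 w \<Longrightarrow> w = y"
  using e2 assms unfolding end_ok_def by auto

lemma n1: "n - 1 \<noteq> n" using n3 by simp
lemma n2: "n - 2 < n - 1" using n3 by simp

lemma c1_ne_y: "tp x = n \<Longrightarrow> c1 \<noteq> y"
proof
  assume tx: "tp x = n" and "c1 = y"
  then have "res_adj n W tp inc z x y"
    using c1[OF tx] x_res y_res n1 inc_sym[OF x(1) y(1)] unfolding res_adj_def by auto
  then show False using not_adj_xy by simp
qed

lemma c2_ne_x: "tp y = n \<Longrightarrow> c2 \<noteq> x"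
proof
  assume ty: "tp y = n" and "c2 = x"
  then have "res_adj n W tp inc z y x"
    using c2[OF ty] x_res y_res n1 inc_sym[OF x(1) y(1)] unfolding res_adj_def by auto
  then show False using not_adj_xy res_adj_sym by blast
qed

lemma c1_ne_c2: "tp x = n \<Longrightarrow> tp y = n \<Longrightarrow> c1 \<noteq> c2"
proof
  assume tx: "tp x = n" and ty: "tp y = n" and "c1 = c2"
  then have "inc c1 y" using c2[OF ty] by simp
  then have "y = x" using c1(5)[OF tx y(1) ty] by simp
  then show False using x_ne_y by simp
qed

lemma pt_vals: "pt i = n \<or> pt i = n - 1" by (simp add: ptype_def)
lemma pt_Suc: "pt (Suc i) = (if pt i = n then n - 1 else n)"
  using n1 by (auto simp: ptype_def)
lemma pt_Suc_ne: "pt (Suc i) \<noteq> pt i" using pt_Suc n1 by (auto simp: ptype_def)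
lemma pt0: "pt 0 = tp x" using x(2) by (auto simp: ptype_def)
lemma pt_last: "pt (m - 1) = tp y"
proof -
  have "even (m - 1) \<longleftrightarrow> odd m" using m4 by simp
  then show ?thesis using parity x(2) y(2) n1 by (auto simp: ptype_def)
qed
lemma pt_ge: "n - 1 \<le> pt i" by (simp add: ptype_def)

lemma pv0: "PV 0 = Inl x" by (simp add: pv_def)
lemma pv_last: "PV (m - 1) = Inl y" using m4 by (simp add: pv_def)
lemma m_facts: "m - 1 \<noteq> 1" "m - 2 \<noteq> 1" "m - 2 \<noteq> m - 1" "m - 2 \<noteq> 0" "m - 1 \<noteq> 0"
   "Suc (m - 2) = m - 1" "(1::nat) \<le> m - 2"
  using m4 by auto
lemma pv1: "tp x = n \<Longrightarrow> PV 1 = Inl c1" using m_facts by (simp add: pv_def)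
lemma pv_m2: "tp y = n \<Longrightarrow> PV (m - 2) = Inl c2" using m_facts by (simp add: pv_def)

lemma pv_cases: "PV i = Inl a \<Longrightarrow> (i = 0 \<and> a = x) \<or> (i = m - 1 \<and> a = y) \<or>
   (i = 1 \<and> tp x = n \<and> a = c1) \<or> (i = m - 2 \<and> tp y = n \<and> a = c2)"
  by (auto simp: pv_def split: if_splits)

lemma pv_inr: "PV i = Inr u \<Longrightarrow> u = PathV i"
  by (auto simp: pv_def split: if_splits)

lemma pv_not_att[simp]: "PV i \<noteq> Inr (Att j a)"
  using pv_inr by fastforce
lemma att_not_pv[simp]: "Inr (Att j a) \<noteq> PV i"
  using pv_not_att by metis

lemma pv_new: "i \<le> m - 1 \<Longrightarrow> PV i = Inr (PathV i) \<longleftrightarrow> new i"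
  using m4 by (auto simp: pv_def is_new_def)

lemma new_le: "new i \<Longrightarrow> 1 \<le> i \<and> i \<le> m - 2" by (simp add: is_new_def)

lemma new_pv: "new i \<Longrightarrow> PV i = Inr (PathV i)"
  using pv_new new_le by fastforce

lemma pv_inl_W: "PV i = Inl a \<Longrightarrow> a \<in> W"
  using pv_cases x y c1 c2 by blast

lemma pv_inl_z: "PV i = Inl a \<Longrightarrow> inc a z"
  using pv_cases x y c1 c2 by blast

lemma pv_inl_tp: assumes "i \<le> m - 1" "PV i = Inl a" shows "tp a = pt i"
proof -
  have "pt (m - 2) \<noteq> pt (m - 1)" using pt_Suc_ne[of "m - 2"] m4
    by (metis Suc_diff_Suc Suc_1 diff_Suc_1 less_le_trans numeral_less_iff one_less_numeral_iff semiring_norm(76) Suc_le_lessD)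
  then show ?thesis using pv_cases[OF assms(2)] pt0 pt_last c1 c2 pt_vals[of "m - 2"] pt_vals[of 1] n1
    by (auto simp: ptype_def)
qed

lemma pv_inj:
  assumes "i \<le> m - 1" "j \<le> m - 1" "PV i = PV j"
  shows "i = j"
proof (cases "PV i")
  case (Inl a)
  then have A: "PV j = Inl a" using assms by simp
  have m1: "m - 2 \<noteq> 1" "m - 1 \<noteq> 0" "m - 2 \<noteq> 0" "m - 1 \<noteq> 1" "m - 2 \<noteq> m - 1" using m4 by auto
  have "tp x = n \<Longrightarrow> c1 \<noteq> x" using c1 n1 by fastforce
  moreover have "tp y = n \<Longrightarrow> c2 \<noteq> y" using c2 n1 by fastforce
  moreover have "tp x = n \<Longrightarrow> c1 \<noteq> y" by (rule c1_ne_y)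
  moreover have "tp y = n \<Longrightarrow> c2 \<noteq> x" by (rule c2_ne_x)
  ultimately show ?thesis using pv_cases[OF Inl] pv_cases[OF A] x_ne_y c1_ne_c2 m1 by metis
next
  case (Inr u)
  then have "u = PathV i" "u = PathV j" using pv_inr assms by (auto simp: pv_inr)
  then show ?thesis by simp
qed

lemma W'_cases:
  assumes "u \<in> W'"
  obtains (old) a where "u = Inl a" "a \<in> W"
  | (path) i where "u = Inr (PathV i)" "new i"
  | (att) i a where "u = Inr (Att i a)" "new i" "pt i = n" "a \<in> V" "tp a = n - 1"
       "a \<noteq> prec (i - 1)" "a \<noteq> prec (Suc i)"
  using assms unfolding ext_W_def by blast

lemma W'_Inl: "Inl a \<in> W' \<longleftrightarrow> a \<in> W" unfolding ext_W_def by auto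
lemma W'_PathV: "Inr (PathV i) \<in> W' \<longleftrightarrow> new i" unfolding ext_W_def by auto
lemma W'_Att: "Inr (Att i a) \<in> W' \<longleftrightarrow> new i \<and> pt i = n \<and> a \<in> V \<and> tp a = n - 1 \<and>
   a \<noteq> prec (i - 1) \<and> a \<noteq> prec (Suc i)" unfolding ext_W_def by auto

lemma T'_Inl[simp]: "T' (Inl a) = tp a" by (simp add: ext_tp_def)
lemma T'_PathV[simp]: "T' (Inr (PathV i)) = pt i" by (simp add: ext_tp_def)
lemma T'_Att[simp]: "T' (Inr (Att i a)) = n - 1" by (simp add: ext_tp_def)

lemma pv_W': "i \<le> m - 1 \<Longrightarrow> PV i \<in> W'"
proof (cases "PV i")
  case (Inl a) then show ?thesis using pv_inl_W W'_Inl by simp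
next
  case (Inr u)
  assume "i \<le> m - 1"
  then show ?thesis using Inr pv_inr pv_new W'_PathV by metis
qed

lemma pv_tp': "i \<le> m - 1 \<Longrightarrow> T' (PV i) = pt i"
proof (cases "PV i")
  case (Inl a) assume "i \<le> m - 1" then show ?thesis using Inl pv_inl_tp by simp
next
  case (Inr u) then show ?thesis using pv_inr by fastforce
qed

lemma I'_Inl[simp]: "I' (Inl a) (Inl b) = inc a b" by (simp add: ext_inc_def)

lemma I'_gen: "\<not> (\<exists>a b. u = Inl a \<and> v = Inl b) \<Longrightarrow> I' u v = (u = v \<or> NI u v \<or> NI v u)"
  by (cases u; cases v) (auto simp: ext_inc_def)

lemma I'_comm: "\<not> (\<exists>a b. u = Inl a \<and> v = Inl b) \<Longrightarrow> I' u v = I' v u"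
  using I'_gen[of u v] I'_gen[of v u] by auto

lemma NI_def': "NI u v \<longleftrightarrow>
     (\<exists>i. Suc i \<le> m - 1 \<and> u = PV i \<and> v = PV (Suc i)) \<or>
     (\<exists>i e. u = Inr (PathV i) \<and> v = Inl e \<and> tp e \<le> n - 2 \<and> (pt i = n \<or> inc e (prec i))) \<or>
     (\<exists>i a. u = Inr (Att i a) \<and> (v = Inr (PathV i) \<or> (\<exists>e. v = Inl e \<and> tp e \<le> n - 2 \<and> inc e a)))"
  by (simp add: new_inc_def)

lemma W'_tp: assumes "u \<in> W'" shows "1 \<le> T' u \<and> T' u \<le> n"
  using assms by (cases rule: W'_cases) (use n3 tp_range in \<open>auto simp: ptype_def\<close>)

lemma W'_inr_tp: assumes "u \<in> W'" "u = Inr w" shows "n - 1 \<le> T' u"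
  using assms(1) by (cases rule: W'_cases) (use assms(2) pt_ge in auto)

lemma low_inl: assumes "u \<in> W'" "T' u \<le> n - 2" shows "\<exists>a. u = Inl a \<and> a \<in> W"
proof (cases u)
  case (Inl a) then show ?thesis using assms(1) W'_Inl by simp
next
  case (Inr w) then show ?thesis using W'_inr_tp[OF assms(1) Inr] assms(2) n2 by simp
qed

lemma pv_low: assumes "k \<le> m - 1" "PV k = Inl e" shows "\<not> tp e \<le> n - 2"
proof -
  have "tp e = pt k" by (rule pv_inl_tp[OF assms])
  then show ?thesis using pt_ge[of k] n2 by simp
qed

lemma low_PathV:
  assumes "e \<in> W" "tp e \<le> n - 2"
  shows "I' (Inr (PathV i)) (Inl e) \<longleftrightarrow> (pt i = n \<or> inc e (prec i))"
proof -
  have "\<not> NI (Inl e) (Inr (PathV i))"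
  proof
    assume "NI (Inl e) (Inr (PathV i))"
    then obtain k where "Suc k \<le> m - 1" "Inl e = PV k" unfolding NI_def' by auto
    then show False using pv_low[of k e] assms(2) by simp
  qed
  moreover have "NI (Inr (PathV i)) (Inl e) \<longleftrightarrow> (pt i = n \<or> inc e (prec i))"
  proof
    assume "NI (Inr (PathV i)) (Inl e)"
    then consider (a) k where "Suc k \<le> m - 1" "Inl e = PV (Suc k)" | (b) "pt i = n \<or> inc e (prec i)"
      unfolding NI_def' by auto
    then show "pt i = n \<or> inc e (prec i)"
    proof cases
      case a then show ?thesis using pv_low[of "Suc k" e] assms(2) by simp
    next
      case b then show ?thesis .
    qed
  next
    assume "pt i = n \<or> inc e (prec i)"
    then show "NI (Inr (PathV i)) (Inl e)" unfolding NI_def' using assms(2) by blast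
  qed
  ultimately show ?thesis using I'_gen[of "Inr (PathV i)" "Inl e"] by auto
qed

lemma low_Att:
  assumes "e \<in> W" "tp e \<le> n - 2"
  shows "I' (Inr (Att i a)) (Inl e) \<longleftrightarrow> inc e a"
proof -
  have "\<not> NI (Inl e) (Inr (Att i a))"
    using pv_not_att unfolding NI_def' by (metis sum.distinct(1))
  moreover have "NI (Inr (Att i a)) (Inl e) \<longleftrightarrow> inc e a"
    using assms(2) unfolding NI_def' by auto
  ultimately show ?thesis using I'_gen[of "Inr (Att i a)" "Inl e"] by auto
qed

lemma NI_types: assumes "u \<in> W'" "v \<in> W'" "NI u v" shows "T' u \<noteq> T' v"
proof -
  consider (a) i where "Suc i \<le> m - 1" "u = PV i" "v = PV (Suc i)"
    | (b) i e where "u = Inr (PathV i)" "v = Inl e" "tp e \<le> n - 2"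
    | (c) i a where "u = Inr (Att i a)" "v = Inr (PathV i)"
    | (d) i a e where "u = Inr (Att i a)" "v = Inl e" "tp e \<le> n - 2"
    using assms(3) unfolding NI_def' by blast
  then show ?thesis
  proof cases
    case a then show ?thesis using pv_tp'[of i] pv_tp'[of "Suc i"] pt_Suc_ne[of i] by simp
  next
    case b then show ?thesis using pt_ge[of i] n2 by simp
  next
    case c
    have "pt i = n" using assms(1) c W'_Att by simp
    then show ?thesis using c n1 by simp
  next
    case d then show ?thesis using n2 by simp
  qed
qed

lemma geom': "geometry {1..n} W' T' I'"
  unfolding geometry_def
proof (intro conjI ballI)
  fix a assume "a \<in> W'" then show "T' a \<in> {1..n}" using W'_tp by simp
next
  fix a b assume a: "a \<in> W'" and b: "b \<in> W'"
  show "I' a b = I' b a"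
  proof (cases "\<exists>a' b'. a = Inl a' \<and> b = Inl b'")
    case True then show ?thesis using a b W'_Inl inc_sym by auto
  next
    case False then show ?thesis using I'_comm by blast
  qed
  show "T' a = T' b \<longrightarrow> I' a b = (a = b)"
  proof
    assume t: "T' a = T' b"
    show "I' a b = (a = b)"
    proof (cases "\<exists>a' b'. a = Inl a' \<and> b = Inl b'")
      case True
      then obtain a' b' where "a = Inl a'" "b = Inl b'" by blast
      then show ?thesis using a b W'_Inl inc_same t by auto
    next
      case False
      then show ?thesis using I'_gen[OF False] NI_types a b t by metis
    qed
  qed
qed

lemma I'_sym: "a \<in> W' \<Longrightarrow> b \<in> W' \<Longrightarrow> I' a b = I' b a"
  using geom' unfolding geometry_def by blast

lemma propF': "prop_F n W' T' I'"
  unfolding prop_F_def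
proof (intro ballI impI)
  fix a b assume a: "a \<in> W'" and b: "b \<in> W'" and t: "T' a \<le> n - 2 \<and> T' b = n"
  obtain a0 where a0: "a = Inl a0" "a0 \<in> W" using low_inl a t by blast
  show "I' a b" using b
  proof (cases rule: W'_cases)
    case (old b0) then show ?thesis using pF a0 t unfolding prop_F_def by auto
  next
    case (path i)
    then have "I' b a" using low_PathV a0 t by simp
    then show ?thesis using I'_sym a b by simp
  next
    case (att i a') then show ?thesis using t n1 by simp
  qed
qed

lemma propI': "prop_I n W' T'"
  unfolding prop_I_def
proof
  have "{w \<in> W'. T' w = n} \<subseteq> Inl ` {w\<in>W. tp w = n} \<union> (\<lambda>i. Inr (PathV i)) ` {..m}"
  proof
    fix w assume w: "w \<in> {w \<in> W'. T' w = n}"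
    then have "w \<in> W'" by simp
    then show "w \<in> Inl ` {w\<in>W. tp w = n} \<union> (\<lambda>i. Inr (PathV i)) ` {..m}"
    proof (cases rule: W'_cases)
      case (old a) then show ?thesis using w by auto
    next
      case (path i) then show ?thesis using new_le[of i] by auto
    next
      case (att i a) then show ?thesis using w n1 by auto
    qed
  qed
  moreover have "finite {w\<in>W. tp w = n}" using pI unfolding prop_I_def by blast
  ultimately show "finite {w \<in> W'. T' w = n}" by (meson finite_Un finite_atMost finite_imageI finite_subset)
  have cW: "countable W" using pI unfolding prop_I_def by blast
  have "W' \<subseteq> Inl ` W \<union> range (\<lambda>i. Inr (PathV i)) \<union> (\<lambda>(i, a). Inr (Att i a)) ` (UNIV \<times> V)"
    unfolding ext_W_def by auto
  moreover have "countable (Inl ` W \<union> range (\<lambda>i. Inr (PathV i)) \<union> (\<lambda>(i, a). Inr (Att i a)) ` (UNIV \<times> V))"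
    using cW countable_subset[OF VW cW] by auto
  ultimately show "countable W'" using countable_subset by blast
qed

lemma propV': "prop_V n V' W' T'"
  unfolding prop_V_def
proof
  fix w assume w: "w \<in> W' - V'"
  then have "w \<in> W'" by simp
  then show "T' w = n - 1 \<or> T' w = n"
  proof (cases rule: W'_cases)
    case (old a) then show ?thesis using w pV unfolding prop_V_def by auto
  next
    case (path i) then show ?thesis using pt_vals by auto
  next
    case (att i a) then show ?thesis by simp
  qed
qed

lemma IP: "is_precursor n V' W' T' I' u (Inl b0) \<longleftrightarrow>
   b0 \<in> V \<and> tp b0 = n - 1 \<and> (\<forall>e\<in>W. 1 \<le> tp e \<and> tp e \<le> n - 2 \<longrightarrow> (I' u (Inl e) \<longleftrightarrow> inc b0 e))"
proof -
  have A: "(\<forall>e\<in>W'. 1 \<le> T' e \<and> T' e \<le> n - 2 \<longrightarrow> (I' u e \<longleftrightarrow> I' (Inl b0) e)) \<longleftrightarrow>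
        (\<forall>e\<in>W. 1 \<le> tp e \<and> tp e \<le> n - 2 \<longrightarrow> (I' u (Inl e) \<longleftrightarrow> inc b0 e))"
  proof
    assume h: "\<forall>e\<in>W'. 1 \<le> T' e \<and> T' e \<le> n - 2 \<longrightarrow> (I' u e \<longleftrightarrow> I' (Inl b0) e)"
    show "\<forall>e\<in>W. 1 \<le> tp e \<and> tp e \<le> n - 2 \<longrightarrow> (I' u (Inl e) \<longleftrightarrow> inc b0 e)"
    proof (intro ballI impI)
      fix e assume "e \<in> W" "1 \<le> tp e \<and> tp e \<le> n - 2"
      then show "I' u (Inl e) \<longleftrightarrow> inc b0 e" using h[rule_format, of "Inl e"] W'_Inl by simp
    qed
  next
    assume h: "\<forall>e\<in>W. 1 \<le> tp e \<and> tp e \<le> n - 2 \<longrightarrow> (I' u (Inl e) \<longleftrightarrow> inc b0 e)"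
    show "\<forall>e\<in>W'. 1 \<le> T' e \<and> T' e \<le> n - 2 \<longrightarrow> (I' u e \<longleftrightarrow> I' (Inl b0) e)"
    proof (intro ballI impI)
      fix e assume e: "e \<in> W'" "1 \<le> T' e \<and> T' e \<le> n - 2"
      then obtain e0 where "e = Inl e0" "e0 \<in> W" using low_inl by blast
      then show "I' u e \<longleftrightarrow> I' (Inl b0) e" using h e by simp
    qed
  qed
  show ?thesis unfolding is_precursor_def using A by auto
qed

lemma IP_inl: assumes "is_precursor n V' W' T' I' u b" obtains b0 where "b = Inl b0"
  using assms unfolding is_precursor_def by blast

lemma PU': assumes "is_precursor n V' W' T' I' u (Inl b)" "is_precursor n V' W' T' I' u (Inl b')"
  shows "b = b'"
proof -
  from assms[unfolded IP] show ?thesis using precursor_unique by auto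
qed

lemma prec_facts: assumes "k \<le> m - 1" "pt k = n - 1"
  shows "prec k \<in> V" "tp (prec k) = n - 1" "inc (prec k) z"
proof -
  have h: "case PV k of Inl e \<Rightarrow> is_precursor n V W tp inc e (prec k)
           | Inr _ \<Rightarrow> prec k \<in> V \<and> tp (prec k) = n - 1 \<and> inc (prec k) z"
    using pok assms unfolding prec_ok_def by blast
  have "prec k \<in> V \<and> tp (prec k) = n - 1 \<and> inc (prec k) z"
  proof (cases "PV k")
    case (Inl e)
    then have p: "is_precursor n V W tp inc e (prec k)" using h by simp
    have "inc e z" using pv_inl_z Inl by blast
    moreover have "1 \<le> tp z \<and> tp z \<le> n - 2" using z n3 by simp
    ultimately have "inc (prec k) z" using p z(1) unfolding is_precursor_def by blast
    then show ?thesis using p unfolding is_precursor_def by blast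
  next
    case (Inr u) then show ?thesis using h by simp
  qed
  then show "prec k \<in> V" "tp (prec k) = n - 1" "inc (prec k) z" by auto
qed

lemma prec_inj: "k \<le> m - 1 \<Longrightarrow> pt k = n - 1 \<Longrightarrow> k' \<le> m - 1 \<Longrightarrow> pt k' = n - 1 \<Longrightarrow> prec k = prec k' \<Longrightarrow> k = k'"
  using pok unfolding prec_ok_def inj_on_def by blast

lemma PVPREC: assumes "k \<le> m - 1" "pt k = n - 1"
  shows "is_precursor n V' W' T' I' (PV k) (Inl (prec k))"
proof -
  have h: "case PV k of Inl e \<Rightarrow> is_precursor n V W tp inc e (prec k)
           | Inr _ \<Rightarrow> prec k \<in> V \<and> tp (prec k) = n - 1 \<and> inc (prec k) z"
    using pok assms unfolding prec_ok_def by blast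
  show ?thesis
  proof (cases "PV k")
    case (Inl e)
    then have p: "is_precursor n V W tp inc e (prec k)" using h by simp
    show ?thesis unfolding IP Inl using p by (simp add: is_precursor_def)
  next
    case (Inr u)
    then have u: "u = PathV k" using pv_inr by simp
    have pk: "prec k \<in> V" "tp (prec k) = n - 1" using prec_facts assms by auto
    show ?thesis unfolding IP Inr u
    proof (intro conjI ballI impI)
      show "prec k \<in> V" by (rule pk(1))
      show "tp (prec k) = n - 1" by (rule pk(2))
      fix e assume e: "e \<in> W" "1 \<le> tp e \<and> tp e \<le> n - 2"
      have "I' (Inr (PathV k)) (Inl e) \<longleftrightarrow> inc e (prec k)"
        using low_PathV[OF e(1)] e(2) assms(2) n1 by simp
      then show "I' (Inr (PathV k)) (Inl e) \<longleftrightarrow> inc (prec k) e"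
        using inc_sym[OF e(1) V_W[OF pk(1)]] by simp
    qed
  qed
qed

lemma propH': "prop_H n V' W' T' I'"
  unfolding prop_H_def
proof (intro ballI impI)
  fix a assume a: "a \<in> W'" and t: "T' a = n - 1"
  show "\<exists>b. is_precursor n V' W' T' I' a b" using a
  proof (cases rule: W'_cases)
    case (old a0)
    then obtain b0 where "is_precursor n V W tp inc a0 b0" using pH t unfolding prop_H_def by auto
    then have "is_precursor n V' W' T' I' a (Inl b0)" unfolding IP old by (simp add: is_precursor_def)
    then show ?thesis by blast
  next
    case (path i)
    then have "PV i = a" "i \<le> m - 1" "pt i = n - 1" using new_pv new_le[of i] t by auto
    then show ?thesis using PVPREC by metis
  next
    case (att i a0)
    have "is_precursor n V' W' T' I' a (Inl a0)" unfolding IP att(1)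
    proof (intro conjI ballI impI)
      show "a0 \<in> V" by (rule att(4))
      show "tp a0 = n - 1" by (rule att(5))
      fix e assume e: "e \<in> W" "1 \<le> tp e \<and> tp e \<le> n - 2"
      then show "I' (Inr (Att i a0)) (Inl e) \<longleftrightarrow> inc a0 e"
        using low_Att[OF e(1)] inc_sym[OF e(1) V_W[OF att(4)]] by simp
    qed
    then show ?thesis by blast
  qed
qed

end

definition std :: "nat \<Rightarrow> nat \<Rightarrow> 'k::division_ring" where
  "std i = (\<lambda>j. if j = i then 1 else 0)"

lemma std_indep: "lin_indep N (std :: nat \<Rightarrow> nat \<Rightarrow> 'k::division_ring)"
  unfolding lin_indep_def
proof (intro allI impI)
  fix c :: "nat \<Rightarrow> 'k" and i assume h: "lincomb N c std = (\<lambda>_. 0)" and i: "i < N"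
  have "lincomb N c std i = (\<Sum>i'<N. if i' = i then c i else 0)"
    unfolding lincomb_def std_def by (rule sum.cong) auto
  also have "\<dots> = c i" using i by simp
  finally show "c i = 0" using h by simp
qed

lemma std_vecs: "i < N \<Longrightarrow> std i \<in> vecs N"
  unfolding std_def vecs_def by auto

lemma exists_out:
  fixes b :: "nat \<Rightarrow> nat \<Rightarrow> 'k::division_ring"
  assumes "lin_indep d b" "d < N"
  shows "\<exists>u\<in>vecs N. u \<notin> lspan d b"
proof (rule ccontr)
  assume "\<not> (\<exists>u\<in>vecs N. u \<notin> lspan d b)"
  then have "\<And>i. i < N \<Longrightarrow> (std i :: nat \<Rightarrow> 'k) \<in> lspan d b" using std_vecs by blast
  then have "N \<le> d" by (rule steinitz[OF std_indep])
  then show False using assms(2) by simp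
qed

lemma subsingleton_finite: "\<forall>a\<in>X. \<forall>b\<in>X. a = b \<Longrightarrow> finite X"
proof (cases "X = {}")
  case False
  assume h: "\<forall>a\<in>X. \<forall>b\<in>X. a = b"
  obtain a where "a \<in> X" using False by blast
  then have "X = {a}" using h by blast
  then show ?thesis by simp
qed simp

context base
begin

lemma many_hyp: "infinite {h \<in> V. tp h = n - 1 \<and> inc h z}"
proof -
  obtain bz where bz: "lin_indep (tp z) bz" "lspan (tp z) bz = sp z" "sp z \<subseteq> vecs n"
    by (rule sp_basis[OF z_V])
  define d where "d = n - 2"
  have dn: "Suc d = n - 1" "Suc (Suc d) = n" "d < n" using n3 by (auto simp: d_def)
  note bz = bz[unfolded z(2), folded d_def]
  have bzv: "bz i \<in> vecs n" if "i < d" for i using lspan_member[OF that, of bz] bz by auto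
  obtain u where u: "u \<in> vecs n" "u \<notin> lspan d bz" using exists_out[OF bz(1) dn(3)] by blast
  define B1 where "B1 = bz(d := u)"
  have liB1: "lin_indep (Suc d) B1" unfolding B1_def by (rule lin_indep_ext[OF bz(1) u(2)])
  have "Suc d < n" using dn by simp
  then obtain w where w: "w \<in> vecs n" "w \<notin> lspan (Suc d) B1" using exists_out[OF liB1] by blast
  define B2 where "B2 = B1(Suc d := w)"
  have liB2: "lin_indep (Suc (Suc d)) B2" unfolding B2_def by (rule lin_indep_ext[OF liB1 w(2)])
  have B2lc: "lincomb (Suc (Suc d)) G B2 j = lincomb d G bz j + G d * u j + G (Suc d) * w j" for G j
  proof -
    have "lincomb d G B2 = lincomb d G bz"
      by (rule lincomb_cong) (auto simp: B2_def B1_def)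
    then show ?thesis by (simp add: lincomb_Suc B2_def B1_def)
  qed
  have B2z: "G d = 0 \<and> G (Suc d) = 0" if "\<And>j. lincomb d G bz j + G d * u j + G (Suc d) * w j = 0" for G
  proof -
    have "lincomb (Suc (Suc d)) G B2 = (\<lambda>_. 0)" using that B2lc by (auto intro: ext)
    then show ?thesis using liB2 unfolding lin_indep_def by simp
  qed
  define v where "v t = (\<lambda>j. u j + t * w j)" for t
  define F where "F t = bz(d := v t)" for t
  define H where "H t = lspan (Suc d) (F t)" for t
  have vout: "v t \<notin> lspan d bz" for t
  proof
    assume "v t \<in> lspan d bz"
    then obtain g where g: "v t = lincomb d g bz" by (rule lspanE)
    define G where "G i = (if i < d then - g i else if i = d then 1 else t)" for i
    have "lincomb d G bz = lincomb d (\<lambda>i. - g i) bz" by (rule lincomb_cong) (auto simp: G_def)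
    then have "\<And>j. lincomb d G bz j = - lincomb d g bz j" by (simp add: lincomb_def sum_negf)
    have "lincomb d G bz j + G d * u j + G (Suc d) * w j = 0" for j
    proof -
      have e1: "lincomb d g bz j = u j + t * w j" using fun_cong[OF g, of j] by (simp add: v_def)
      have "lincomb d G bz j + G d * u j + G (Suc d) * w j = - (u j + t * w j) + u j + t * w j"
        using e1 \<open>\<And>j. lincomb d G bz j = - lincomb d g bz j\<close>[of j] by (simp add: G_def)
      also have "\<dots> = 0" by (simp add: algebra_simps)
      finally show ?thesis .
    qed
    then have "G d = 0" using B2z by blast
    then show False by (simp add: G_def)
  qed
  have liF: "lin_indep (Suc d) (F t)" for t unfolding F_def by (rule lin_indep_ext[OF bz(1) vout])
  have vv: "v t \<in> vecs n" for t using u(1) w(1) by (simp add: v_def vecs_def)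
  have Fv: "F t i \<in> vecs n" if "i < Suc d" for t i using bzv vv that by (auto simp: F_def)
  have Hdim: "subspace_dim n (Suc d) (H t)" for t
    unfolding subspace_dim_def H_def using liF lspan_vecs[of "Suc d" "F t" n] Fv by blast
  have zH: "sp z \<subseteq> H t" for t
  proof -
    have "lspan d bz \<subseteq> lspan (Suc d) (F t)"
    proof (rule lspan_subset)
      fix i assume i: "i < d"
      have "F t i \<in> lspan (Suc d) (F t)" using i by (intro lspan_member) simp
      then show "bz i \<in> lspan (Suc d) (F t)" using i by (simp add: F_def)
    qed
    then show ?thesis using bz(2) by (simp add: H_def)
  qed
  have Hinj: "t = t'" if "H t = H t'" for t t'
  proof -
    have "v t' \<in> H t'" unfolding H_def using lspan_member[of d "Suc d" "F t'"] by (simp add: F_def)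
    then have "v t' \<in> H t" using that by simp
    then obtain g where g: "v t' = lincomb (Suc d) g (F t)" unfolding H_def by (rule lspanE)
    have lcF: "lincomb (Suc d) g (F t) j = lincomb d g bz j + g d * v t j" for j
      by (simp add: lincomb_Suc F_def lincomb_upd)
    define G where "G i = (if i < d then g i else if i = d then g d - 1 else g d * t - t')" for i
    have "lincomb d G bz = lincomb d g bz" by (rule lincomb_cong) (auto simp: G_def)
    then have "lincomb d G bz j + G d * u j + G (Suc d) * w j = 0" for j
      using fun_cong[OF g, of j] lcF[of j]
      by (simp add: G_def v_def algebra_simps)
    then have "G d = 0 \<and> G (Suc d) = 0" using B2z by blast
    then have gd: "g d - 1 = 0" and gt: "g d * t - t' = 0" by (auto simp: G_def)
    then have "g d = 1" by simp
    then show "t = t'" using gt by simp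
  qed
  have "\<forall>t. \<exists>h. h \<in> V \<and> sp h = H t \<and> tp h = n - 1"
    using sp_surj[OF Hdim] dn n3 by auto
  from choice[OF this] obtain h where hh: "\<forall>t. h t \<in> V \<and> sp (h t) = H t \<and> tp (h t) = n - 1" by blast
  then have h: "\<And>t. h t \<in> V" "\<And>t. sp (h t) = H t" "\<And>t. tp (h t) = n - 1" by auto
  have hinj: "inj h" unfolding inj_on_def using h(2) Hinj by metis
  have hz: "inc (h t) z" for t using inc_V[OF h(1) z_V] zH h(2) by simp
  have sub: "range h \<subseteq> {h \<in> V. tp h = n - 1 \<and> inc h z}" using h hz by auto
  have "infinite (range h)"
  proof
    assume "finite (range h)"
    then have "finite (UNIV :: 'k set)" using finite_imageD hinj by blast
    then show False using K_inf by simp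
  qed
  then show ?thesis using sub finite_subset by blast
qed

lemma no_4cycle:
  assumes c: "c \<in> W" "tp c = n - 1" "inc c z" and c': "c' \<in> W" "tp c' = n - 1" "inc c' z" "c \<noteq> c'"
    and a: "a \<in> W" "tp a = n" and w: "w \<in> W" "tp w = n" "a \<noteq> w"
    and i1: "inc c a" "inc c' a" "inc c w" "inc c' w"
  shows False
proof -
  have n1: "n - 1 \<noteq> n" using n3 by simp
  have za: "inc a z" using pF z a n3 inc_sym[OF z(1) a(1)] unfolding prop_F_def by auto
  have zw: "inc w z" using pF z w n3 inc_sym[OF z(1) w(1)] unfolding prop_F_def by auto
  define p where "p i = (if i = 0 then c else if i = 1 then a else if i = 2 then c' else w)" for i :: nat
  have I4: "\<And>i. i < (4::nat) \<Longrightarrow> i = 0 \<or> i = 1 \<or> i = 2 \<or> i = 3" by auto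
  have rv: "c \<in> res_vertices n W tp inc z" "c' \<in> res_vertices n W tp inc z"
     "a \<in> res_vertices n W tp inc z" "w \<in> res_vertices n W tp inc z"
    using c c' a w za zw by (auto simp: res_vertices_def)
  have "res_cycle n W tp inc z (2 * 2)"
    unfolding res_cycle_def
  proof (intro conjI exI)
    show "3 \<le> (2 * 2::nat)" by simp
    show "inj_on p {..<2 * 2}"
      unfolding inj_on_def
    proof (intro ballI impI)
      fix i j assume i: "i \<in> {..<2 * 2}" and j: "j \<in> {..<2 * 2}" and e: "p i = p j"
      have "i = 0 \<or> i = 1 \<or> i = 2 \<or> i = 3" "j = 0 \<or> j = 1 \<or> j = 2 \<or> j = 3" using i j I4 by auto
      have d: "c \<noteq> a" "c \<noteq> w" "c' \<noteq> a" "c' \<noteq> w" "a \<noteq> c" "w \<noteq> c" "a \<noteq> c'" "w \<noteq> c'"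
        "c' \<noteq> c" "w \<noteq> a"
        using c c' a w n1 by metis+
      show "i = j" using \<open>i = 0 \<or> i = 1 \<or> i = 2 \<or> i = 3\<close> \<open>j = 0 \<or> j = 1 \<or> j = 2 \<or> j = 3\<close> e
        by (elim disjE) (simp_all add: p_def d c'(4) w(3))
    qed
    show "\<forall>i<2 * 2. res_adj n W tp inc z (p i) (p (Suc i mod (2 * 2)))"
    proof (intro allI impI)
      fix i :: nat assume "i < 2 * 2"
      then have "i = 0 \<or> i = 1 \<or> i = 2 \<or> i = 3" using I4 by auto
      moreover have "res_adj n W tp inc z c a" unfolding res_adj_def using rv i1 c a n1 by simp
      moreover have "res_adj n W tp inc z a c'" unfolding res_adj_def using rv i1 c' a n1 inc_sym[OF a(1) c'(1)] by simp
      moreover have "res_adj n W tp inc z c' w" unfolding res_adj_def using rv i1 c' w n1 by simp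
      moreover have "res_adj n W tp inc z w c" unfolding res_adj_def using rv i1 c w n1 inc_sym[OF w(1) c(1)] by simp
      ultimately show "res_adj n W tp inc z (p i) (p (Suc i mod (2 * 2)))"
        by (elim disjE) (simp_all add: p_def)
    qed
  qed
  moreover have "2 < m" using m4 by simp
  ultimately show False using pP z unfolding prop_P_def by blast
qed

lemma end_exists:
  assumes a: "a \<in> W" "tp a = n"
  shows "\<exists>c. end_ok n W tp inc z a c"
proof -
  define S where "S = {h \<in> V. tp h = n - 1 \<and> inc h z}"
  have "\<forall>h\<in>S. \<exists>w. w \<in> W \<and> tp w = n - 1 \<and> is_precursor n V W tp inc w h \<and> inc w a"
    using pC a unfolding prop_C_def S_def by blast
  from bchoice[OF this] obtain f where ff: "\<forall>h\<in>S. f h \<in> W \<and> tp (f h) = n - 1 \<and> is_precursor n V W tp inc (f h) h \<and> inc (f h) a"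
    by blast
  then have f: "\<And>h. h \<in> S \<Longrightarrow> f h \<in> W \<and> tp (f h) = n - 1 \<and> is_precursor n V W tp inc (f h) h \<and> inc (f h) a"
    by blast
  have zlow: "1 \<le> tp z \<and> tp z \<le> n - 2" using z n3 by simp
  have fz: "inc (f h) z" if "h \<in> S" for h
    using f[OF that] that z(1) zlow unfolding S_def is_precursor_def by auto
  have finj: "inj_on f S"
    unfolding inj_on_def
  proof (intro ballI impI)
    fix h h' assume h: "h \<in> S" and h': "h' \<in> S" and e: "f h = f h'"
    have p: "is_precursor n V W tp inc (f h) h" "is_precursor n V W tp inc (f h) h'"
      using f[OF h] f[OF h'] e by auto
    show "h = h'"
      by (rule precursor_unique) (use h h' p in \<open>auto simp: S_def is_precursor_def\<close>)
  qed
  define A where "A = f ` S"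
  have Ainf: "infinite A" using many_hyp finj finite_imageD unfolding A_def S_def by blast
  define T where "T = {w\<in>W. tp w = n}"
  have Tfin: "finite T" using pI unfolding prop_I_def T_def by blast
  have sub1: "finite {c \<in> A. inc c w'}" if "w' \<in> T - {a}" for w'
  proof -
    have "\<forall>c1\<in>{c \<in> A. inc c w'}. \<forall>c2\<in>{c \<in> A. inc c w'}. c1 = c2"
    proof (intro ballI)
      fix c1 c2 assume c1: "c1 \<in> {c \<in> A. inc c w'}" and c2: "c2 \<in> {c \<in> A. inc c w'}"
      show "c1 = c2"
      proof (rule ccontr)
        assume ne: "c1 \<noteq> c2"
        obtain h1 where h1: "h1 \<in> S" "c1 = f h1" using c1 unfolding A_def by blast
        obtain h2 where h2: "h2 \<in> S" "c2 = f h2" using c2 unfolding A_def by blast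
        show False
          by (rule no_4cycle[of c1 c2 a w'])
            (use f[OF h1(1)] f[OF h2(1)] fz[OF h1(1)] fz[OF h2(1)] h1 h2 ne a that c1 c2 in \<open>auto simp: T_def\<close>)
      qed
    qed
    then show ?thesis by (rule subsingleton_finite)
  qed
  define Bad where "Bad = (\<Union>w'\<in>T - {a}. {c \<in> A. inc c w'})"
  have "finite Bad" unfolding Bad_def using Tfin sub1 by blast
  then have "infinite (A - Bad)" using Ainf Diff_infinite_finite by blast
  then have "A - Bad \<noteq> {}" by (metis finite.emptyI)
  then obtain c where c: "c \<in> A" "c \<notin> Bad" by blast
  obtain h where h: "h \<in> S" "c = f h" using c(1) unfolding A_def by blast
  have "end_ok n W tp inc z a c"
    unfolding end_ok_def
  proof (intro conjI ballI impI)
    show "c \<in> W" "tp c = n - 1" "inc c a" using f[OF h(1)] h(2) by auto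
    show "inc c z" using fz[OF h(1)] h(2) by simp
    fix w assume w: "w \<in> W" "tp w = n \<and> inc c w"
    show "w = a"
    proof (rule ccontr)
      assume "w \<noteq> a"
      then have "c \<in> Bad" using w c(1) unfolding Bad_def T_def by blast
      then show False using c(2) by simp
    qed
  qed
  then show ?thesis by blast
qed

end

context ext
begin

lemma EDGE:
  assumes u: "u \<in> W'" and v: "v \<in> W'" and tu: "n - 1 \<le> T' u" and tv: "n - 1 \<le> T' v"
    and ne: "u \<noteq> v" and i: "I' u v"
  shows "(\<exists>a b. u = Inl a \<and> v = Inl b \<and> inc a b) \<or>
         (\<exists>k. Suc k \<le> m - 1 \<and> ((u = PV k \<and> v = PV (Suc k)) \<or> (v = PV k \<and> u = PV (Suc k)))) \<or>
         (\<exists>j a. (u = Inr (Att j a) \<and> v = Inr (PathV j)) \<or> (v = Inr (Att j a) \<and> u = Inr (PathV j)))"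
proof (cases "\<exists>a b. u = Inl a \<and> v = Inl b")
  case True then show ?thesis using i by auto
next
  case False
  then have "NI u v \<or> NI v u" using I'_gen[OF False] i ne by simp
  then show ?thesis
  proof
    assume "NI u v"
    then consider (a) k where "Suc k \<le> m - 1" "u = PV k" "v = PV (Suc k)"
      | (b) e where "v = Inl e" "tp e \<le> n - 2"
      | (c) j a where "u = Inr (Att j a)" "v = Inr (PathV j)"
      unfolding NI_def' by blast
    then show ?thesis
    proof cases
      case a then show ?thesis by blast
    next
      case b then show ?thesis using tv n2 by simp
    next
      case c then show ?thesis by blast
    qed
  next
    assume "NI v u"
    then consider (a) k where "Suc k \<le> m - 1" "v = PV k" "u = PV (Suc k)"
      | (b) e where "u = Inl e" "tp e \<le> n - 2"
      | (c) j a where "v = Inr (Att j a)" "u = Inr (PathV j)"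
      unfolding NI_def' by blast
    then show ?thesis
    proof cases
      case a then show ?thesis by blast
    next
      case b then show ?thesis using tu n2 by simp
    next
      case c then show ?thesis by blast
    qed
  qed
qed

lemma NOINR:
  assumes u: "u \<in> W'" "u = Inr w" "T' u = n - 1" and a0: "a0 \<in> W" "tp a0 = n" and i: "I' u (Inl a0)"
  shows False
proof -
  have tu: "n - 1 \<le> T' u" using u by simp
  have tv: "n - 1 \<le> T' (Inl a0)" using a0 by simp
  have ne: "u \<noteq> Inl a0" using u by simp
  have m: "m - 2 \<noteq> 1" "m - 1 \<noteq> 0" "Suc (m - 2) = m - 1" "m - 2 \<noteq> 0" using m4 by auto
  from EDGE[OF u(1) _ tu tv ne i] a0 W'_Inl
  consider (a) k where "Suc k \<le> m - 1" "u = PV k" "Inl a0 = PV (Suc k)"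
    | (b) k where "Suc k \<le> m - 1" "Inl a0 = PV k" "u = PV (Suc k)"
    using u(2) by auto
  then show False
  proof cases
    case a
    from pv_cases[OF a(3)[symmetric]] show False
    proof (elim disjE conjE)
      assume "Suc k = m - 1" "a0 = y"
      then have "tp y = n" "k = m - 2" using a0 m by auto
      then show False using pv_m2 a(2) u(2) by simp
    next
      assume "Suc k = 1" "tp x = n" "a0 = c1" then show False using c1 a0 n1 by simp
    next
      assume "Suc k = m - 2" "tp y = n" "a0 = c2" then show False using c2 a0 n1 by simp
    qed simp
  next
    case b
    from pv_cases[OF b(2)[symmetric]] show False
    proof (elim disjE conjE)
      assume "k = 0" "a0 = x"
      then have "tp x = n" using a0 by simp
      then show False using pv1 b(3) u(2) \<open>k = 0\<close> by simp
    next
      assume "k = m - 1" then show False using b(1) m by simp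
    next
      assume "k = 1" "tp x = n" "a0 = c1" then show False using c1 a0 n1 by simp
    next
      assume "k = m - 2" "tp y = n" "a0 = c2" then show False using c2 a0 n1 by simp
    qed
  qed
qed

lemma IP_old: "is_precursor n V' W' T' I' (Inl w0) (Inl b0) \<longleftrightarrow> is_precursor n V W tp inc w0 b0"
  unfolding IP by (simp add: is_precursor_def)

lemma ATTPREC: assumes "Inr (Att i a) \<in> W'" shows "is_precursor n V' W' T' I' (Inr (Att i a)) (Inl a)"
proof -
  have a: "a \<in> V" "tp a = n - 1" using assms W'_Att by auto
  show ?thesis unfolding IP
  proof (intro conjI ballI impI)
    show "a \<in> V" "tp a = n - 1" using a by auto
    fix e assume e: "e \<in> W" "1 \<le> tp e \<and> tp e \<le> n - 2"
    then show "I' (Inr (Att i a)) (Inl e) \<longleftrightarrow> inc a e"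
      using low_Att[OF e(1)] inc_sym[OF e(1) V_W[OF a(1)]] by simp
  qed
qed

lemma NBR_n:
  assumes w: "w \<in> W'" "T' w = n - 1" and ni: "new i" "pt i = n" and iw: "I' w (Inr (PathV i))"
  shows "w = PV (i - 1) \<or> w = PV (Suc i) \<or> (\<exists>a'. w = Inr (Att i a'))"
proof -
  have v: "Inr (PathV i) \<in> W'" using ni W'_PathV by simp
  have ne: "w \<noteq> Inr (PathV i)" using w ni n1 by auto
  have tw: "n - 1 \<le> T' w" using w by simp
  have tv: "n - 1 \<le> T' (Inr (PathV i))" using pt_ge by simp
  from EDGE[OF w(1) v tw tv ne iw]
  consider (a) k where "Suc k \<le> m - 1" "w = PV k" "Inr (PathV i) = PV (Suc k)"
    | (b) k where "Suc k \<le> m - 1" "Inr (PathV i) = PV k" "w = PV (Suc k)"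
    | (c) a' where "w = Inr (Att i a')"
    by auto
  then show ?thesis
  proof cases
    case a
    then have "PathV i = PathV (Suc k)" using pv_inr[OF a(3)[symmetric]] by simp
    then have "i = Suc k" by simp
    then show ?thesis using a by simp
  next
    case b
    then have "PathV i = PathV k" using pv_inr[OF b(2)[symmetric]] by simp
    then have "i = k" by simp
    then show ?thesis using b by simp
  next
    case c then show ?thesis by blast
  qed
qed

lemma propC': "prop_C n V' W' T' I'"
  unfolding prop_C_def
proof (intro ballI impI)
  fix a b assume a: "a \<in> W'" and ta: "T' a = n" and b: "b \<in> V'" and tb: "T' b = n - 1"
  obtain b0 where b0: "b = Inl b0" "b0 \<in> V" using b by blast
  have tb0: "tp b0 = n - 1" using tb b0 by simp
  show "\<exists>!w. w \<in> W' \<and> T' w = n - 1 \<and> is_precursor n V' W' T' I' w b \<and> I' w a"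
    using a
  proof (cases rule: W'_cases)
    case (old a0)
    have ta0: "tp a0 = n" using ta old by simp
    obtain w0 where w0: "w0 \<in> W \<and> tp w0 = n - 1 \<and> is_precursor n V W tp inc w0 b0 \<and> inc w0 a0"
      and uq: "\<And>w'. w' \<in> W \<and> tp w' = n - 1 \<and> is_precursor n V W tp inc w' b0 \<and> inc w' a0 \<Longrightarrow> w' = w0"
      using pC old(2) ta0 b0(2) tb0 unfolding prop_C_def by metis
    show ?thesis
    proof (rule ex1I[of _ "Inl w0"])
      show "Inl w0 \<in> W' \<and> T' (Inl w0) = n - 1 \<and> is_precursor n V' W' T' I' (Inl w0) b \<and> I' (Inl w0) a"
        using w0 W'_Inl IP_old b0 old by simp
      fix w assume h: "w \<in> W' \<and> T' w = n - 1 \<and> is_precursor n V' W' T' I' w b \<and> I' w a"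
      show "w = Inl w0"
      proof (cases w)
        case (Inl w')
        then show ?thesis using h uq[of w'] W'_Inl IP_old b0 old by simp
      next
        case (Inr w')
        then show ?thesis using NOINR[of w w' a0] h old ta0 by simp
      qed
    qed
  next
    case (path i)
    have pti: "pt i = n" using ta path by simp
    have il: "1 \<le> i" "i \<le> m - 2" using new_le path(2) by auto
    have pvi: "PV i = Inr (PathV i)" using new_pv path(2) by simp
    have pt1: "pt (i - 1) = n - 1" using pt_Suc[of "i - 1"] pti il n1 pt_vals[of "i - 1"] by (cases "pt (i - 1) = n") auto
    have pt2: "pt (Suc i) = n - 1" using pt_Suc[of i] pti by simp
    have l1: "i - 1 \<le> m - 1" "Suc i \<le> m - 1" using il m4 by auto
    have prd: "prec (i - 1) \<noteq> prec (Suc i)" using prec_inj[OF l1(1) pt1 l1(2) pt2] by auto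
    define cw where "cw = (if b0 = prec (i - 1) then PV (i - 1) else if b0 = prec (Suc i) then PV (Suc i)
                        else Inr (Att i b0))"
    have canon: "w = cw" if h: "w \<in> W' \<and> T' w = n - 1 \<and> is_precursor n V' W' T' I' w b \<and> I' w a" for w
    proof -
      from NBR_n[of w i] h path pti
      consider "w = PV (i - 1)" | "w = PV (Suc i)" | a' where "w = Inr (Att i a')" by auto
      then show ?thesis
      proof cases
        case 1
        have "is_precursor n V' W' T' I' (PV (i - 1)) (Inl b0)" using h b0 1 by simp
        then have "b0 = prec (i - 1)" using PU'[OF PVPREC[OF l1(1) pt1]] by simp
        then show ?thesis using 1 by (simp add: cw_def)
      next
        case 2
        have "is_precursor n V' W' T' I' (PV (Suc i)) (Inl b0)" using h b0 2 by simp
        then have "b0 = prec (Suc i)" using PU'[OF PVPREC[OF l1(2) pt2]] by simp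
        then show ?thesis using 2 prd by (simp add: cw_def)
      next
        case 3
        then have "b0 = a'" using PU'[OF ATTPREC] h b0 by metis
        moreover have "a' \<noteq> prec (i - 1)" "a' \<noteq> prec (Suc i)" using h 3 W'_Att by auto
        ultimately show ?thesis using 3 by (simp add: cw_def)
      qed
    qed
    have ex: "cw \<in> W' \<and> T' cw = n - 1 \<and> is_precursor n V' W' T' I' cw b \<and> I' cw a"
    proof (cases "b0 = prec (i - 1)")
      case True
      have "I' (PV (i - 1)) (Inr (PathV i))"
      proof -
        have si: "Suc (i - 1) = i" using il by simp
        have "NI (PV (i - 1)) (Inr (PathV i))" unfolding NI_def'
          by (rule disjI1, rule exI[of _ "i - 1"]) (use il l1 pvi si in simp)
        then show ?thesis using I'_gen[of "PV (i - 1)" "Inr (PathV i)"] by simp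
      qed
      then show ?thesis using True pv_W'[OF l1(1)] pv_tp'[OF l1(1)] pt1 PVPREC[OF l1(1) pt1] b0 path
        by (simp add: cw_def)
    next
      case F1: False
      show ?thesis
      proof (cases "b0 = prec (Suc i)")
        case True
        have "I' (PV (Suc i)) (Inr (PathV i))"
        proof -
          have "NI (Inr (PathV i)) (PV (Suc i))" unfolding NI_def'
            by (rule disjI1, rule exI[of _ i]) (use l1 pvi in simp)
          then show ?thesis using I'_gen[of "PV (Suc i)" "Inr (PathV i)"] by simp
        qed
        then show ?thesis using True F1 pv_W'[OF l1(2)] pv_tp'[OF l1(2)] pt2 PVPREC[OF l1(2) pt2] b0 path
          by (simp add: cw_def)
      next
        case False
        have aw: "Inr (Att i b0) \<in> W'" using W'_Att path(2) pti b0(2) tb0 F1 False by simp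
        have "NI (Inr (Att i b0)) (Inr (PathV i))" unfolding NI_def' by simp
        then have "I' (Inr (Att i b0)) (Inr (PathV i))" using I'_gen[of "Inr (Att i b0)" "Inr (PathV i)"] by simp
        then show ?thesis using False F1 aw ATTPREC[OF aw] b0 path by (simp add: cw_def)
      qed
    qed
    show ?thesis using ex canon by blast
  next
    case (att i a') then show ?thesis using ta n1 by simp
  qed
qed

end

lemma mod2: "3 \<le> (L::nat) \<Longrightarrow> (b + 2) mod L \<noteq> b mod L"
proof
  assume L: "3 \<le> L" and e: "(b + 2) mod L = b mod L"
  then have "L dvd (b + 2) - b" using mod_eq_dvd_iff_nat[of b "b + 2" L] by simp
  then have "L dvd 2" by simp
  then have "L \<le> 2" using dvd_imp_le by simp
  with L show False by simp
qed

lemma modne: "(a::nat) < b \<Longrightarrow> b - a < L \<Longrightarrow> (J + a) mod L \<noteq> (J + b) mod L"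
proof
  assume ab: "a < b" and bl: "b - a < L" and e: "(J + a) mod L = (J + b) mod L"
  have "L dvd (J + b) - (J + a)" using mod_eq_dvd_iff_nat[of "J + a" "J + b" L] e ab by simp
  then have "L dvd b - a" by simp
  then have "L \<le> b - a" using dvd_imp_le ab by simp
  with bl show False by simp
qed

context ext
begin

abbreviation "RV z0 \<equiv> res_vertices n W' T' I' (Inl z0)"
abbreviation "R z0 \<equiv> res_adj n W' T' I' (Inl z0)"

lemma R_sym: "R z0 u v \<Longrightarrow> R z0 v u"
  unfolding res_adj_def res_vertices_def using I'_sym by auto

lemma R_facts: assumes "R z0 u v"
  shows "u \<in> W'" "v \<in> W'" "n - 1 \<le> T' u" "n - 1 \<le> T' v" "T' u \<noteq> T' v" "I' u v" "u \<noteq> v"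
    "u \<in> RV z0" "v \<in> RV z0"
  using assms n1 unfolding res_adj_def res_vertices_def by auto

lemma RV_old: "Inl e \<in> RV z0 \<Longrightarrow> e \<in> res_vertices n W tp inc z0"
  unfolding res_vertices_def by (simp add: W'_Inl)

lemma R_old: "R z0 (Inl a) (Inl b) \<Longrightarrow> res_adj n W tp inc z0 a b"
  unfolding res_adj_def using RV_old by simp

lemma NB:
  assumes i: "0 < i" "i < m - 1" and r: "R z0 (PV i) w" and na: "\<And>j a. w \<noteq> Inr (Att j a)"
  shows "w = PV (i - 1) \<or> w = PV (Suc i)"
proof -
  note f = R_facts[OF r]
  from EDGE[OF f(1) f(2) f(3) f(4) f(7) f(6)]
  consider (a) a b where "PV i = Inl a" "w = Inl b" "inc a b"
    | (b) k where "Suc k \<le> m - 1" "PV i = PV k" "w = PV (Suc k)"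
    | (c) k where "Suc k \<le> m - 1" "w = PV k" "PV i = PV (Suc k)"
    using na by auto
  then show ?thesis
  proof cases
    case a
    have bW: "b \<in> W" using f(2) a(2) W'_Inl by simp
    have tb: "tp b \<le> n" using tp_range[OF bW] by simp
    from pv_cases[OF a(1)] i have "(i = 1 \<and> tp x = n \<and> a = c1) \<or> (i = m - 2 \<and> tp y = n \<and> a = c2)" by auto
    then show ?thesis
    proof
      assume h: "i = 1 \<and> tp x = n \<and> a = c1"
      have "tp b \<noteq> n - 1" using f(5) a(1,2) h c1 by simp
      then have "tp b = n" using f(4) a(2) tb by simp
      then have "b = x" using c1(5) h bW a(3) by simp
      then show ?thesis using a(2) h pv0 by simp
    next
      assume h: "i = m - 2 \<and> tp y = n \<and> a = c2"
      have "tp b \<noteq> n - 1" using f(5) a(1,2) h c2 by simp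
      then have "tp b = n" using f(4) a(2) tb by simp
      then have "b = y" using c2(5) h bW a(3) by simp
      then show ?thesis using a(2) h pv_last m_facts(6) by simp
    qed
  next
    case b
    then have "i = k" using pv_inj[of i k] i by simp
    then show ?thesis using b by simp
  next
    case c
    then have "i = Suc k" using pv_inj[of i "Suc k"] i by simp
    then show ?thesis using c by simp
  qed
qed

lemma NA: assumes "R z0 (Inr (Att j a)) w" shows "w = Inr (PathV j)"
proof -
  note f = R_facts[OF assms]
  from EDGE[OF f(1) f(2) f(3) f(4) f(7) f(6)] show ?thesis by auto
qed

lemma ZEQ:
  assumes z0: "z0 \<in> W" "tp z0 = n - 2" and all: "\<And>k. k \<le> m - 1 \<Longrightarrow> I' (PV k) (Inl z0)"
  shows "z0 = z"
proof -
  have low: "1 \<le> tp z0 \<and> tp z0 \<le> n - 2" using z0 n3 by simp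
  have key: "inc (prec k) z0" if "k \<le> m - 1" "pt k = n - 1" for k
  proof -
    have P: "is_precursor n V' W' T' I' (PV k) (Inl (prec k))" by (rule PVPREC[OF that])
    then show ?thesis using all[OF that(1)] z0(1) low unfolding IP by blast
  qed
  obtain k1 k2 where k: "k1 \<le> m - 1" "k2 \<le> m - 1" "pt k1 = n - 1" "pt k2 = n - 1" "k1 \<noteq> k2"
  proof (cases "tp x = n")
    case True
    have "pt 1 = n - 1" "pt 3 = n - 1" using True n1 by (auto simp: ptype_def)
    moreover have "(1::nat) \<le> m - 1" "(3::nat) \<le> m - 1" using m4 by auto
    ultimately show ?thesis using that[of 1 3] by simp
  next
    case False
    have "pt 0 = n - 1" "pt 2 = n - 1" using False by (auto simp: ptype_def)
    moreover have "(0::nat) \<le> m - 1" "(2::nat) \<le> m - 1" using m4 by auto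
    ultimately show ?thesis using that[of 0 2] by simp
  qed
  have pne: "prec k1 \<noteq> prec k2" using prec_inj k by blast
  have z0V: "z0 \<in> V" using in_V[OF z0(1)] z0(2) n3 by simp
  have pf1: "prec k1 \<in> V" "tp (prec k1) = n - 1" "inc (prec k1) z" using prec_facts[OF k(1) k(3)] by auto
  have pf2: "prec k2 \<in> V" "tp (prec k2) = n - 1" "inc (prec k2) z" using prec_facts[OF k(2) k(4)] by auto
  have "z = z0"
    by (rule hyp_meet[OF pf1(1,2) pf2(1,2) pne z_V z(2) z0V z0(2) pf1(3) key[OF k(1,3)] pf2(3) key[OF k(2,4)]])
  then show ?thesis by simp
qed

lemma run:
  fixes Q :: "nat \<Rightarrow> 'e + 'e newel" and g :: "nat \<Rightarrow> nat"
  assumes Q0: "Q 0 = PV (g 0)" and Q1: "Q 1 = PV (g 1)"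
    and step: "\<And>r. 1 \<le> r \<Longrightarrow> r < N \<Longrightarrow> 0 < g r \<and> g r < m - 1 \<and>
        ((g (r - 1) = g r - 1 \<and> g (Suc r) = Suc (g r)) \<or> (g (r - 1) = Suc (g r) \<and> g (Suc r) = g r - 1))"
    and adj: "\<And>r. r < N \<Longrightarrow> R zz (Q r) (Q (Suc r))"
    and dist: "\<And>r. 1 \<le> r \<Longrightarrow> r < N \<Longrightarrow> Q (Suc r) \<noteq> Q (r - 1)"
    and noatt: "\<And>r j a. Q r \<noteq> Inr (Att j a)"
  shows "\<forall>r \<le> N. Q r = PV (g r)"
proof -
  have "\<forall>r' \<le> r. r' \<le> N \<longrightarrow> Q r' = PV (g r')" for r
  proof (induction r)
    case 0 then show ?case using Q0 by simp
  next
    case (Suc r)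
    show ?case
    proof (intro allI impI)
      fix r' assume r': "r' \<le> Suc r" "r' \<le> N"
      show "Q r' = PV (g r')"
      proof (cases "r' \<le> r")
        case True then show ?thesis using Suc.IH r' by blast
      next
        case False
        then have rr: "r' = Suc r" using r' by simp
        show ?thesis
        proof (cases "r = 0")
          case True then show ?thesis using rr Q1 by simp
        next
          case False
          then have r1: "1 \<le> r" "r < N" using rr r' by auto
          have qr: "Q r = PV (g r)" using Suc.IH r1 by simp
          have qr1: "Q (r - 1) = PV (g (r - 1))" using Suc.IH r1 by simp
          note st = step[OF r1]
          have rq: "R zz (PV (g r)) (Q (Suc r))" using adj[OF r1(2)] qr by simp
          have g1: "0 < g r" "g r < m - 1" using st by auto
          have "Q (Suc r) = PV (g r - 1) \<or> Q (Suc r) = PV (Suc (g r))"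
            by (rule NB[OF g1 rq noatt])
          then show ?thesis using st dist[OF r1] qr1 rr by auto
        qed
      qed
    qed
  qed
  then show ?thesis by blast
qed

lemma FIN:
  fixes P :: "nat \<Rightarrow> 'e + 'e newel" and f :: "nat \<Rightarrow> 'e + 'e newel"
  assumes z0: "z0 \<in> W" "tp z0 = n - 2"
    and L3: "3 \<le> L"
    and Padj: "\<And>r. R z0 (P r) (P (Suc r))"
    and Pinj: "\<And>a b. P a = P b \<Longrightarrow> a mod L = b mod L"
    and Pper: "\<And>r. P (r + L) = P r"
    and noatt: "\<And>r j a. P r \<noteq> Inr (Att j a)"
    and Pf: "\<And>k. k \<le> m - 1 \<Longrightarrow> P (J + k) = f k"
    and f0: "f 0 = Inl a" and fl: "f (m - 1) = Inl b"
    and finj: "inj_on f {..m - 1}"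
    and fnew: "\<And>i. new i \<Longrightarrow> \<exists>k \<le> m - 1. f k = Inr (PathV i)"
    and fall: "\<And>k'. k' \<le> m - 1 \<Longrightarrow> \<exists>k \<le> m - 1. f k = PV k'"
  shows "z0 = z \<and> res_walk n W tp inc z0 (L - (m - 1)) a b"
proof -
  have zz: "z0 = z"
  proof (rule ZEQ[OF z0])
    fix k' assume "k' \<le> m - 1"
    then obtain k where k: "k \<le> m - 1" "f k = PV k'" using fall by blast
    have "P (J + k) \<in> RV z0" using R_facts(8)[OF Padj[of "J + k"]] .
    then show "I' (PV k') (Inl z0)" using Pf[OF k(1)] k(2) unfolding res_vertices_def by simp
  qed
  have PJ: "P (J + L) = P J" using Pper[of J] .
  have Lm1: "m - 1 < L"
  proof (rule ccontr)
    assume "\<not> m - 1 < L"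
    then have Lle: "L \<le> m - 1" by simp
    then have "f L = f 0" using Pf[of L] Pf[of 0] PJ by simp
    then have "L = 0" using finj Lle unfolding inj_on_def by auto
    then show False using L3 by simp
  qed
  define M where "M = L - (m - 1)"
  have inl: "\<exists>e. P (J + r) = Inl e" if r: "m - 1 \<le> r" "r \<le> L" for r
  proof (cases "r = L")
    case True then show ?thesis using PJ Pf[of 0] f0 by simp
  next
    case F: False
    show ?thesis
    proof (cases "r = m - 1")
      case True then show ?thesis using Pf[of "m - 1"] fl by simp
    next
      case False
      show ?thesis
      proof (cases "P (J + r)")
        case (Inl e) then show ?thesis by simp
      next
        case (Inr u)
        have W: "P (J + r) \<in> W'" using R_facts(1)[OF Padj[of "J + r"]] .
        obtain i where i: "u = PathV i" using noatt Inr by (cases u) auto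
        have "new i" using W Inr i W'_PathV by simp
        then obtain k where k: "k \<le> m - 1" "f k = Inr (PathV i)" using fnew by blast
        then have "P (J + k) = P (J + r)" using Pf[OF k(1)] Inr i by simp
        then have "(J + k) mod L = (J + r) mod L" by (rule Pinj)
        moreover have "k < r" "r - k < L" using k(1) r False F by auto
        ultimately show ?thesis using modne by blast
      qed
    qed
  qed
  define w where "w l = (case P (J + L - l) of Inl e \<Rightarrow> e | Inr _ \<Rightarrow> a)" for l
  have wP: "P (J + L - l) = Inl (w l)" if lM: "l \<le> M" for l
  proof -
    have "m - 1 \<le> L - l" "L - l \<le> L" using lM Lm1 unfolding M_def by auto
    then obtain e where e: "P (J + (L - l)) = Inl e" using inl[of "L - l"] by blast
    moreover have "J + (L - l) = J + L - l" using lM Lm1 unfolding M_def by simp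
    ultimately show ?thesis unfolding w_def by simp
  qed
  have "res_walk n W tp inc z0 M a b"
    unfolding res_walk_def
  proof (intro exI[of _ w] conjI allI impI)
    show "w 0 = a" using wP[of 0] PJ Pf[of 0] f0 by simp
    have "J + L - M = J + (m - 1)" using Lm1 unfolding M_def by simp
    then show "w M = b" using wP[of M] Pf[of "m - 1"] fl by simp
    fix l
    show "l \<le> M \<Longrightarrow> w l \<in> res_vertices n W tp inc z0"
    proof -
      assume l: "l \<le> M"
      have "P (J + L - l) \<in> RV z0" using R_facts(8)[OF Padj[of "J + L - l"]] .
      then show ?thesis using wP[OF l] RV_old by simp
    qed
    assume l: "l < M"
    have "R z0 (P (J + L - Suc l)) (P (Suc (J + L - Suc l)))" by (rule Padj)
    moreover have "Suc (J + L - Suc l) = J + L - l" using l Lm1 unfolding M_def by simp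
    ultimately have "R z0 (Inl (w (Suc l))) (Inl (w l))" using wP[of "Suc l"] wP[of l] l by simp
    then show "res_adj n W tp inc z0 (w l) (w (Suc l))" using R_sym R_old by blast
  qed
  then show ?thesis using zz unfolding M_def by simp
qed

end

context ext
begin

lemma propP': "prop_P n m W' T' I'"
  unfolding prop_P_def
proof (intro ballI impI allI notI)
  fix z' k assume z': "z' \<in> W'" "T' z' = n - 2" and k: "k < m" and cyc: "res_cycle n W' T' I' z' (2 * k)"
  have "\<exists>a. z' = Inl a \<and> a \<in> W" using low_inl[OF z'(1)] z'(2) by simp
  then obtain z0 where z0: "z' = Inl z0" "z0 \<in> W" by blast
  have tz0: "tp z0 = n - 2" using z' z0 by simp
  define L where "L = 2 * k"
  obtain p where L3: "3 \<le> L" and pinj: "inj_on p {..<L}" and padj: "\<forall>i<L. R z0 (p i) (p (Suc i mod L))"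
    using cyc z0 unfolding res_cycle_def L_def by blast
  have Lm: "L - (m - 1) \<le> m" using k unfolding L_def by simp
  have L0: "0 < L" using L3 by simp
  define P where "P r = p (r mod L)" for r
  have Padj: "R z0 (P r) (P (Suc r))" for r
  proof -
    have "R z0 (p (r mod L)) (p (Suc (r mod L) mod L))" using padj L0 by simp
    then show ?thesis unfolding P_def by (simp add: mod_Suc_eq)
  qed
  have Pinj: "a mod L = b mod L" if "P a = P b" for a b
  proof -
    have "a mod L \<in> {..<L}" "b mod L \<in> {..<L}" using L0 by auto
    then show ?thesis using pinj that unfolding P_def inj_on_def by blast
  qed
  have Pper: "P (r + L) = P r" for r unfolding P_def by simp
  have Pmul: "P (r + L * c) = P r" for r c unfolding P_def by simp
  have mod2': "P (b + 2) \<noteq> P b" for b using Pinj mod2[OF L3] by blast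
  have noatt: "P r \<noteq> Inr (Att j a)" for r j a
  proof
    assume h: "P r = Inr (Att j a)"
    have A: "P (Suc r) = Inr (PathV j)" using NA Padj[of r] h by simp
    have s: "Suc (r + L - 1) = r + L" using L0 by simp
    have "R z0 (P (r + L - 1)) (P (Suc (r + L - 1)))" by (rule Padj)
    then have "R z0 (P r) (P (r + L - 1))" using s Pper R_sym by simp
    then have B: "P (r + L - 1) = Inr (PathV j)" using NA h by simp
    have "r + L - 1 + 2 = Suc r + L" using L0 by simp
    then have "P (r + L - 1 + 2) = P (Suc r)" using Pper[of "Suc r"] by simp
    then show False using mod2'[of "r + L - 1"] A B by simp
  qed
  show False
  proof (cases "\<exists>r u. P r = Inr u")
    case False
    have pl: "\<exists>e. p i = Inl e" if "i < L" for i
    proof -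
      have "P i = p i" using that unfolding P_def by simp
      then show ?thesis using False by (cases "p i") auto
    qed
    define q where "q i = (case p i of Inl e \<Rightarrow> e | Inr _ \<Rightarrow> z0)" for i
    have pq: "p i = Inl (q i)" if "i < L" for i using pl[OF that] unfolding q_def by auto
    have "res_cycle n W tp inc z0 (2 * k)"
      unfolding res_cycle_def L_def[symmetric]
    proof (intro conjI exI)
      show "3 \<le> L" by (rule L3)
      show "inj_on q {..<L}"
        unfolding inj_on_def
      proof (intro ballI impI)
        fix i j assume i: "i \<in> {..<L}" and j: "j \<in> {..<L}" and e: "q i = q j"
        then have "p i = p j" using pq by simp
        then show "i = j" using pinj i j unfolding inj_on_def by blast
      qed
      show "\<forall>i<L. res_adj n W tp inc z0 (q i) (q (Suc i mod L))"
      proof (intro allI impI)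
        fix i assume i: "i < L"
        have "Suc i mod L < L" using L0 by simp
        then have "R z0 (Inl (q i)) (Inl (q (Suc i mod L)))" using padj i pq by metis
        then show "res_adj n W tp inc z0 (q i) (q (Suc i mod L))" by (rule R_old)
      qed
    qed
    then show False using pP z0 tz0 k unfolding prop_P_def by blast
  next
    case True
    then obtain r u where ru: "P r = Inr u" by blast
    obtain i0 where u: "u = PathV i0" using noatt ru by (cases u) auto
    have "P r \<in> W'" using R_facts(1)[OF Padj[of r]] .
    then have ni0: "new i0" using ru u W'_PathV by simp
    have i0: "0 < i0" "i0 < m - 1" using new_le[OF ni0] m4 by auto
    have pvi0: "PV i0 = Inr (PathV i0)" using new_pv ni0 by simp
    define j where "j = r + L * m"
    have Pj: "P j = PV i0" using Pmul ru u pvi0 unfolding j_def by simp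
    have "m * 1 \<le> m * L" using L3 by (intro mult_le_mono2) simp
    then have "m \<le> L * m" by (simp add: mult.commute)
    then have jm: "m \<le> j" unfolding j_def by linarith
    have j1: "Suc (j - 1) = j" using jm m4 by simp
    have rj: "R z0 (PV i0) (P (Suc j))" using Padj[of j] Pj by simp
    have nb1: "P (Suc j) = PV (i0 - 1) \<or> P (Suc j) = PV (Suc i0)" by (rule NB[OF i0 rj noatt])
    have "R z0 (P (j - 1)) (P j)" using Padj[of "j - 1"] j1 by simp
    then have rj2: "R z0 (PV i0) (P (j - 1))" using R_sym Pj by simp
    have nb2: "P (j - 1) = PV (i0 - 1) \<or> P (j - 1) = PV (Suc i0)" by (rule NB[OF i0 rj2 noatt])
    have dj: "P (Suc j) \<noteq> P (j - 1)" using mod2'[of "j - 1"] j1 by simp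
    have distU: "P (j + Suc r') \<noteq> P (j + (r' - 1))" if "1 \<le> r'" for r'
    proof -
      have "j + (r' - 1) + 2 = j + Suc r'" using that by simp
      then show ?thesis using mod2'[of "j + (r' - 1)"] by simp
    qed
    have distD: "P (j - Suc r') \<noteq> P (j - (r' - 1))" if "1 \<le> r'" "r' < m" for r'
    proof -
      have "j - Suc r' + 2 = j - (r' - 1)" using that jm by simp
      then show ?thesis using mod2'[of "j - Suc r'"] by simp
    qed
    have adjU: "R z0 (P (j + r')) (P (j + Suc r'))" for r' using Padj[of "j + r'"] by simp
    have adjD: "R z0 (P (j - r')) (P (j - Suc r'))" if "r' < m" for r'
    proof -
      have "Suc (j - Suc r') = j - r'" using that jm by simp
      then show ?thesis using Padj[of "j - Suc r'"] R_sym by simp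
    qed
    have nU: "P (j + r') \<noteq> Inr (Att jj a)" for r' jj a using noatt by simp
    have nD: "P (j - r') \<noteq> Inr (Att jj a)" for r' jj a using noatt by simp
    consider (F) "P (Suc j) = PV (Suc i0)" "P (j - 1) = PV (i0 - 1)"
      | (B) "P (Suc j) = PV (i0 - 1)" "P (j - 1) = PV (Suc i0)"
      using nb1 nb2 dj by metis
    then show False
    proof cases
      case F
      have up: "\<forall>r'\<le>m - 1 - i0. P (j + r') = PV (i0 + r')"
      proof (rule run[where Q="\<lambda>r'. P (j + r')" and g="\<lambda>r'. i0 + r'" and zz=z0])
        show "P (j + 0) = PV (i0 + 0)" using Pj by simp
        show "P (j + 1) = PV (i0 + 1)" using F by simp
        fix r' assume "1 \<le> r'" "r' < m - 1 - i0"
        then show "0 < i0 + r' \<and> i0 + r' < m - 1 \<and>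
          (i0 + (r' - 1) = i0 + r' - 1 \<and> i0 + Suc r' = Suc (i0 + r') \<or>
           i0 + (r' - 1) = Suc (i0 + r') \<and> i0 + Suc r' = i0 + r' - 1)" by auto
      next
        fix r' show "R z0 (P (j + r')) (P (j + Suc r'))" by (rule adjU)
      next
        fix r' assume "1 \<le> r'" "r' < m - 1 - i0"
        then show "P (j + Suc r') \<noteq> P (j + (r' - 1))" using distU by simp
      next
        fix r' jj a show "P (j + r') \<noteq> Inr (Att jj a)" by (rule nU)
      qed
      have down: "\<forall>r'\<le>i0. P (j - r') = PV (i0 - r')"
      proof (rule run[where Q="\<lambda>r'. P (j - r')" and g="\<lambda>r'. i0 - r'" and zz=z0])
        show "P (j - 0) = PV (i0 - 0)" using Pj by simp
        show "P (j - 1) = PV (i0 - 1)" using F by simp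
        fix r' assume "1 \<le> r'" "r' < i0"
        then show "0 < i0 - r' \<and> i0 - r' < m - 1 \<and>
          (i0 - (r' - 1) = i0 - r' - 1 \<and> i0 - Suc r' = Suc (i0 - r') \<or>
           i0 - (r' - 1) = Suc (i0 - r') \<and> i0 - Suc r' = i0 - r' - 1)" using i0 by auto
      next
        fix r' assume "r' < i0" then show "R z0 (P (j - r')) (P (j - Suc r'))" using adjD i0 by simp
      next
        fix r' assume "1 \<le> r'" "r' < i0"
        then show "P (j - Suc r') \<noteq> P (j - (r' - 1))" using distD i0 by simp
      next
        fix r' jj a show "P (j - r') \<noteq> Inr (Att jj a)" by (rule nD)
      qed
      define J where "J = j - i0"
      have Pf: "P (J + k') = PV k'" if "k' \<le> m - 1" for k'
      proof (cases "i0 \<le> k'")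
        case True
        then have "J + k' = j + (k' - i0)" "k' - i0 \<le> m - 1 - i0" "i0 + (k' - i0) = k'"
          using that jm i0 unfolding J_def by auto
        then show ?thesis using up by metis
      next
        case False
        then have "J + k' = j - (i0 - k')" "i0 - k' \<le> i0" "i0 - (i0 - k') = k'"
          using that jm i0 unfolding J_def by auto
        then show ?thesis using down by metis
      qed
      have "z0 = z \<and> res_walk n W tp inc z0 (L - (m - 1)) x y"
      proof (rule FIN[OF z0(2) tz0 L3 Padj Pinj Pper noatt Pf pv0 pv_last])
        show "inj_on PV {..m - 1}" unfolding inj_on_def using pv_inj by auto
        fix i assume "new i"
        then show "\<exists>k\<le>m - 1. PV k = Inr (PathV i)" using new_pv new_le[of i] m4
          by (intro exI[of _ i]) auto
      next
        fix k' assume "k' \<le> m - 1" then show "\<exists>k\<le>m - 1. PV k = PV k'" by blast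
      qed
      then show False using far Lm by auto
    next
      case B
      have up: "\<forall>r'\<le>i0. P (j + r') = PV (i0 - r')"
      proof (rule run[where Q="\<lambda>r'. P (j + r')" and g="\<lambda>r'. i0 - r'" and zz=z0])
        show "P (j + 0) = PV (i0 - 0)" using Pj by simp
        show "P (j + 1) = PV (i0 - 1)" using B by simp
        fix r' assume "1 \<le> r'" "r' < i0"
        then show "0 < i0 - r' \<and> i0 - r' < m - 1 \<and>
          (i0 - (r' - 1) = i0 - r' - 1 \<and> i0 - Suc r' = Suc (i0 - r') \<or>
           i0 - (r' - 1) = Suc (i0 - r') \<and> i0 - Suc r' = i0 - r' - 1)" using i0 by auto
      next
        fix r' show "R z0 (P (j + r')) (P (j + Suc r'))" by (rule adjU)
      next
        fix r' assume "1 \<le> r'" "r' < i0"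
        then show "P (j + Suc r') \<noteq> P (j + (r' - 1))" using distU by simp
      next
        fix r' jj a show "P (j + r') \<noteq> Inr (Att jj a)" by (rule nU)
      qed
      have down: "\<forall>r'\<le>m - 1 - i0. P (j - r') = PV (i0 + r')"
      proof (rule run[where Q="\<lambda>r'. P (j - r')" and g="\<lambda>r'. i0 + r'" and zz=z0])
        show "P (j - 0) = PV (i0 + 0)" using Pj by simp
        show "P (j - 1) = PV (i0 + 1)" using B by simp
        fix r' assume "1 \<le> r'" "r' < m - 1 - i0"
        then show "0 < i0 + r' \<and> i0 + r' < m - 1 \<and>
          (i0 + (r' - 1) = i0 + r' - 1 \<and> i0 + Suc r' = Suc (i0 + r') \<or>
           i0 + (r' - 1) = Suc (i0 + r') \<and> i0 + Suc r' = i0 + r' - 1)" by auto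
      next
        fix r' assume "r' < m - 1 - i0" then show "R z0 (P (j - r')) (P (j - Suc r'))" using adjD by simp
      next
        fix r' assume "1 \<le> r'" "r' < m - 1 - i0"
        then show "P (j - Suc r') \<noteq> P (j - (r' - 1))" using distD by simp
      next
        fix r' jj a show "P (j - r') \<noteq> Inr (Att jj a)" by (rule nD)
      qed
      define J where "J = j - (m - 1 - i0)"
      have Pf: "P (J + k') = PV (m - 1 - k')" if "k' \<le> m - 1" for k'
      proof (cases "k' \<le> m - 1 - i0")
        case True
        then have "J + k' = j - (m - 1 - i0 - k')" "m - 1 - i0 - k' \<le> m - 1 - i0"
            "i0 + (m - 1 - i0 - k') = m - 1 - k'"
          using that jm i0 unfolding J_def by auto
        then show ?thesis using down by metis
      next
        case False
        then have "J + k' = j + (k' - (m - 1 - i0))" "k' - (m - 1 - i0) \<le> i0"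
            "i0 - (k' - (m - 1 - i0)) = m - 1 - k'"
          using that jm i0 unfolding J_def by auto
        then show ?thesis using up by metis
      qed
      have f0: "PV (m - 1 - 0) = Inl y" using pv_last by simp
      have fl: "PV (m - 1 - (m - 1)) = Inl x" using pv0 by simp
      have "z0 = z \<and> res_walk n W tp inc z0 (L - (m - 1)) y x"
      proof (rule FIN[where f="\<lambda>k. PV (m - 1 - k)", OF z0(2) tz0 L3 Padj Pinj Pper noatt Pf f0 fl])
        show "inj_on (\<lambda>k. PV (m - 1 - k)) {..m - 1}"
          unfolding inj_on_def
        proof (intro ballI impI)
          fix a b assume a: "a \<in> {..m - 1}" and b: "b \<in> {..m - 1}" and e: "PV (m - 1 - a) = PV (m - 1 - b)"
          then have "m - 1 - a = m - 1 - b" using pv_inj by simp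
          then show "a = b" using a b by simp
        qed
        fix i assume ni: "new i"
        then have "i \<le> m - 1" "m - 1 - (m - 1 - i) = i" using new_le[of i] by auto
        then show "\<exists>k\<le>m - 1. PV (m - 1 - k) = Inr (PathV i)" using new_pv[OF ni]
          by (intro exI[of _ "m - 1 - i"]) auto
      next
        fix k' assume "k' \<le> m - 1"
        then have "m - 1 - (m - 1 - k') = k'" by simp
        then show "\<exists>k\<le>m - 1. PV (m - 1 - k) = PV k'" by (intro exI[of _ "m - 1 - k'"]) auto
      qed
      then have "res_walk n W tp inc z (L - (m - 1)) x y" using walk_rev by blast
      then show False using far Lm by auto
    qed
  qed
qed

lemma all_props': "all_props n m V' W' T' I'"
  unfolding all_props_def using propF' propI' propV' propP' propH' propC' by blast

end

theorem mainTheorem5: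
  fixes n m :: nat
    and W V :: "'e set" and tp :: "'e \<Rightarrow> nat" and inc :: "'e \<Rightarrow> 'e \<Rightarrow> bool"
    and sp :: "'e \<Rightarrow> (nat \<Rightarrow> 'k::division_ring) set"
    and x y z :: 'e
  assumes n3: "3 \<le> n" and m4: "4 \<le> m"
    and K_inf: "infinite (UNIV :: 'k set)" and K_count: "countable (UNIV :: 'k set)"
    and geom: "geometry {1..n} W tp inc"
    and VW: "V \<subseteq> W"
    and sp_bij: "bij_betw sp V {U. \<exists>d. 1 \<le> d \<and> d \<le> n - 1 \<and> subspace_dim n d U}"
    and sp_tp: "\<forall>v\<in>V. subspace_dim n (tp v) (sp v)"
    and sp_inc: "\<forall>v\<in>V. \<forall>w\<in>V. inc v w \<longleftrightarrow> (sp v \<subseteq> sp w \<or> sp w \<subseteq> sp v)"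
    and props: "all_props n m V W tp inc"
    and z: "z \<in> W" "tp z = n - 2"
    and x: "x \<in> W" "tp x = n - 1 \<or> tp x = n" "inc x z"
    and y: "y \<in> W" "tp y = n - 1 \<or> tp y = n" "inc y z"
    and parity: "odd m \<longrightarrow> tp x = tp y" "even m \<longrightarrow> tp x \<noteq> tp y"
    and far: "\<forall>L\<le>m. \<not> res_walk n W tp inc z L x y"
  shows "(tp x = n \<longrightarrow> (\<exists>c. end_ok n W tp inc z x c)) \<and>
         (tp y = n \<longrightarrow> (\<exists>c. end_ok n W tp inc z y c)) \<and>
         (\<forall>c1 c2 prec.
            (tp x = n \<longrightarrow> end_ok n W tp inc z x c1) \<and>
            (tp y = n \<longrightarrow> end_ok n W tp inc z y c2) \<and>
            prec_ok n m V W tp inc z x y c1 c2 prec \<longrightarrow>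
            geometry {1..n} (ext_W n m V W tp x y prec) (ext_tp n tp x)
                     (ext_inc n m tp inc x y c1 c2 prec) \<and>
            all_props n m (Inl ` V) (ext_W n m V W tp x y prec) (ext_tp n tp x)
                     (ext_inc n m tp inc x y c1 c2 prec))"
  proof -
  have B: "base n m W V tp inc sp x y z"
    unfolding base_def using n3 m4 K_inf K_count geom VW sp_bij sp_tp sp_inc props z x y parity far
    by blast
  have c1: "tp x = n \<longrightarrow> (\<exists>c. end_ok n W tp inc z x c)"
    using base.end_exists[OF B] x by blast
  have c2: "tp y = n \<longrightarrow> (\<exists>c. end_ok n W tp inc z y c)"
    using base.end_exists[OF B] y by blast
  have c3: "\<forall>c1 c2 prec.
            (tp x = n \<longrightarrow> end_ok n W tp inc z x c1) \<and>
            (tp y = n \<longrightarrow> end_ok n W tp inc z y c2) \<and>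
            prec_ok n m V W tp inc z x y c1 c2 prec \<longrightarrow>
            geometry {1..n} (ext_W n m V W tp x y prec) (ext_tp n tp x)
                     (ext_inc n m tp inc x y c1 c2 prec) \<and>
            all_props n m (Inl ` V) (ext_W n m V W tp x y prec) (ext_tp n tp x)
                     (ext_inc n m tp inc x y c1 c2 prec)"
  proof (intro allI impI)
    fix c1 c2 prec
    assume h: "(tp x = n \<longrightarrow> end_ok n W tp inc z x c1) \<and>
            (tp y = n \<longrightarrow> end_ok n W tp inc z y c2) \<and>
            prec_ok n m V W tp inc z x y c1 c2 prec"
    have E: "ext n m W V tp inc sp x y z c1 c2 prec"
      by (rule ext.intro[OF B]) (rule ext_axioms.intro, use h in auto)
    show "geometry {1..n} (ext_W n m V W tp x y prec) (ext_tp n tp x)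
                     (ext_inc n m tp inc x y c1 c2 prec) \<and>
            all_props n m (Inl ` V) (ext_W n m V W tp x y prec) (ext_tp n tp x)
                     (ext_inc n m tp inc x y c1 c2 prec)"
      using ext.geom'[OF E] ext.all_props'[OF E] by blast
  qed
  show ?thesis using c1 c2 c3 by blast
qed

end
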